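(* Let $f\in L^{1}$. Suppose the matrices $A=(a_{n,k})$, $B=(b_{n,k})$ (as in the context) satisfy, with constants independent of $n,r,s,l$: (i) $a_{n,n}\ll \frac{1}{n+1}$ for all $n$; (ii) $\frac{1}{s+1}\sum_{r=0}^{s}a_{n,r}\ll a_{n,s}$ for $0\le s\le n$; (iii) $\left|a_{n,r}b_{r,r-l}-a_{n,r+1}b_{r+1,r+1-l}\right|\ll \frac{a_{n,r}}{(r+1)^{2}}$ for $0\le l\le r\le n-1$. Then for every natural $n$ and every real $x$, $$\left|\widetilde{T}_{n,A,B}f(x)-\widetilde{f}\!\left(x,\tfrac{\pi}{n+1}\right)\right|\ll \sum_{r=0}^{n}a_{n,r}\left[\frac{1}{r+1}\sum_{k=0}^{r}\widetilde{\bar{w}}_{x}f\!\left(\frac{\pi}{k+1}\right)\right].$$ Moreover, if $x$ is a point at which $\widetilde f(x)$ exists and $$\frac{1}{\pi}\int_{0}^{\frac{\pi}{n+1}}\frac{|\psi_{x}(t)|}{t}\,dt\ll \widetilde{w}_{x}f\!\left(\frac{\pi}{n+1}\right)\quad\text{for all natural } n,$$ then for every natural $n$ $$\left|\widetilde{T}_{n,A,B}f(x)-\widetilde{f}(x)\right|\ll \sum_{r=0}^{n}a_{n,r}\left[\frac{1}{r+1}\sum_{k=0}^{r}\widetilde{\bar{w}}_{x}f\!\left(\frac{\pi}{k+1}\right)\right].$$ The implied constants in the conclusions depend only on the implied constants in the hypotheses.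
   Context: $L^{p}$ ($1\le p<\infty$; resp. $p=\infty$) is the space of $2\pi$-periodic real functions that are $p$-th power Lebesgue integrable (resp. essentially bounded) on $[-\pi,\pi]$, with the usual norm. For $f\in L^1$ with Fourier coefficients $a_\nu(f),b_\nu(f)$, the conjugate partial sums are $\widetilde S_k f(x)=\sum_{\nu=1}^{k}(a_\nu(f)\sin\nu x-b_\nu(f)\cos\nu x)$ ($\widetilde S_0f=0$). Put $\psi_x(t)=f(x+t)-f(x-t)$, $\widetilde f(x,\epsilon)=-\frac{1}{\pi}\int_{\epsilon}^{\pi}\psi_x(t)\frac12\cot\frac t2\,dt$ for $0<\epsilon\le\pi$, and $\widetilde f(x)=\lim_{\epsilon\to0^+}\widetilde f(x,\epsilon)$ (where it exists). $A=(a_{n,k})$, $B=(b_{n,k})$ are infinite lower triangular real matrices with $a_{n,k},b_{n,k}\ge0$ for $0\le k\le n$, $a_{n,k}=b_{n,k}=0$ for $k>n$, and $\sum_{k=0}^n a_{n,k}=\sum_{k=0}^n b_{n,k}=1$ for all $n\ge0$. Define $\widetilde T_{n,A,B}f(x)=\sum_{r=0}^{n}\sum_{k=0}^{r}a_{n,r}b_{r,k}\widetilde S_kf(x)$. Pointwise moduli: $\widetilde w_xf(\delta)=\frac1\delta\int_0^\delta|\psi_x(u)|\,du$ and $\widetilde{\bar w}_xf(\delta)=\sup_{0<t\le\delta}\frac1t\int_0^t|\psi_x(u)|\,du$. Notation: $I_1\ll I_2$ means $I_1\le K I_2$ for a positive constant $K$. *)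

theory Defs
  imports "HOL-Analysis.Analysis"
begin

definition L1 :: "(real \<Rightarrow> real) \<Rightarrow> bool" where
  "L1 f \<longleftrightarrow> (\<forall>x. f (x + 2 * pi) = f x) \<and> set_integrable lborel {-pi..pi} f"

definition fourier_a :: "(real \<Rightarrow> real) \<Rightarrow> nat \<Rightarrow> real" where
  "fourier_a f \<nu> = (1 / pi) * (LINT t:{-pi..pi}|lborel. f t * cos (real \<nu> * t))"

definition fourier_b :: "(real \<Rightarrow> real) \<Rightarrow> nat \<Rightarrow> real" where
  "fourier_b f \<nu> = (1 / pi) * (LINT t:{-pi..pi}|lborel. f t * sin (real \<nu> * t))"

text \<open>Conjugate partial sums; the empty sum gives the value 0 for k = 0.\<close>
definition conj_partial_sum :: "(real \<Rightarrow> real) \<Rightarrow> nat \<Rightarrow> real \<Rightarrow> real" where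
  "conj_partial_sum f k x =
     (\<Sum>\<nu>\<in>{1..k}. fourier_a f \<nu> * sin (real \<nu> * x) - fourier_b f \<nu> * cos (real \<nu> * x))"

definition psi :: "(real \<Rightarrow> real) \<Rightarrow> real \<Rightarrow> real \<Rightarrow> real" where
  "psi f x t = f (x + t) - f (x - t)"

definition conj_trunc :: "(real \<Rightarrow> real) \<Rightarrow> real \<Rightarrow> real \<Rightarrow> real" where
  "conj_trunc f x \<epsilon> = - (1 / pi) * (LINT t:{\<epsilon>..pi}|lborel. psi f x t * (1/2) * cot (t / 2))"

definition admissible_matrix :: "(nat \<Rightarrow> nat \<Rightarrow> real) \<Rightarrow> bool" where
  "admissible_matrix a \<longleftrightarrow>
     (\<forall>n k. k \<le> n \<longrightarrow> a n k \<ge> 0) \<and> (\<forall>n k. n < k \<longrightarrow> a n k = 0) \<and>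
     (\<forall>n. (\<Sum>k=0..n. a n k) = 1)"

definition T_AB :: "(nat \<Rightarrow> nat \<Rightarrow> real) \<Rightarrow> (nat \<Rightarrow> nat \<Rightarrow> real) \<Rightarrow> (real \<Rightarrow> real) \<Rightarrow> nat \<Rightarrow> real \<Rightarrow> real" where
  "T_AB a b f n x = (\<Sum>r=0..n. \<Sum>k=0..r. a n r * b r k * conj_partial_sum f k x)"

definition w_mod :: "(real \<Rightarrow> real) \<Rightarrow> real \<Rightarrow> real \<Rightarrow> real" where
  "w_mod f x \<delta> = (1 / \<delta>) * (LINT u:{0..\<delta>}|lborel. \<bar>psi f x u\<bar>)"

text \<open>The supremum may be infinite, so it is taken in the extended reals.\<close>
definition wbar_mod :: "(real \<Rightarrow> real) \<Rightarrow> real \<Rightarrow> real \<Rightarrow> ereal" where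
  "wbar_mod f x \<delta> = (SUP t\<in>{0<..\<delta>}. ereal ((1 / t) * (LINT u:{0..t}|lborel. \<bar>psi f x u\<bar>)))"

definition rhs_sum :: "(nat \<Rightarrow> nat \<Rightarrow> real) \<Rightarrow> (real \<Rightarrow> real) \<Rightarrow> nat \<Rightarrow> real \<Rightarrow> ereal" where
  "rhs_sum a f n x = (\<Sum>r=0..n. ereal (a n r) *
      (ereal (1 / (real r + 1)) * (\<Sum>k=0..r. wbar_mod f x (pi / (real k + 1)))))"

end

theory Submission
  imports Defs
begin

section \<open>Integrability\<close>

lemma periodic_int:
  assumes per: "\<And>x. f (x + 2 * pi) = f x"
  shows "f (y + 2 * pi * real_of_int m) = f y"
proof -
  have nat: "f (z + 2 * pi * real n) = f z" for z n
  proof (induction n)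
    case 0 then show ?case by simp
  next
    case (Suc n)
    have "z + 2 * pi * real (Suc n) = (z + 2 * pi * real n) + 2 * pi" by (simp add: algebra_simps)
    then show ?case using per[of "z + 2 * pi * real n"] Suc by (metis add.assoc)
  qed
  show ?thesis
  proof (cases "m \<ge> 0")
    case True
    then show ?thesis using nat[of y "nat m"] by simp
  next
    case False
    then have "y = (y + 2 * pi * real_of_int m) + 2 * pi * real (nat (- m))" by simp
    then show ?thesis using nat[of "y + 2 * pi * real_of_int m" "nat (-m)"] by metis
  qed
qed

lemma L1_int_shift:
  assumes "L1 f"
  shows "set_integrable lborel {-pi + 2*pi*real_of_int m .. pi + 2*pi*real_of_int m} f"
proof -
  have i: "integrable lborel (\<lambda>y. indicator {-pi..pi} y *\<^sub>R f y)"
    using assms unfolding L1_def set_integrable_def by auto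
  have "integrable lborel (\<lambda>y. indicator {-pi..pi} (- 2*pi*real_of_int m + 1 * y) *\<^sub>R f (- 2*pi*real_of_int m + 1 * y))"
    by (rule lborel_integrable_real_affine[OF i]) simp
  moreover have "(\<lambda>y. indicator {-pi..pi} (- 2*pi*real_of_int m + 1 * y) *\<^sub>R f (- 2*pi*real_of_int m + 1 * y))
     = (\<lambda>y. indicator {-pi + 2*pi*real_of_int m .. pi + 2*pi*real_of_int m} y *\<^sub>R f y)"
  proof
    fix y
    have "f (- 2*pi*real_of_int m + 1 * y) = f y"
      using periodic_int[of f "- 2*pi*real_of_int m + 1 * y" m] assms unfolding L1_def by simp
    moreover have "indicator {-pi..pi} (- 2*pi*real_of_int m + 1 * y) = (indicator {-pi + 2*pi*real_of_int m .. pi + 2*pi*real_of_int m} y :: real)"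
      by (auto simp: indicator_def)
    ultimately show "indicator {-pi..pi} (- 2*pi*real_of_int m + 1 * y) *\<^sub>R f (- 2*pi*real_of_int m + 1 * y)
       = indicator {-pi + 2*pi*real_of_int m .. pi + 2*pi*real_of_int m} y *\<^sub>R f y" by simp
  qed
  ultimately show ?thesis unfolding set_integrable_def by simp
qed

lemma L1_int_big:
  assumes "L1 f"
  shows "set_integrable lborel {-pi - 2*pi*real N .. pi + 2*pi*real N} f"
proof (induction N)
  case 0
  then show ?case using L1_int_shift[OF assms, of 0] by simp
next
  case (Suc N)
  have a: "set_integrable lborel {-pi + 2*pi*real_of_int (- int N - 1) .. pi + 2*pi*real_of_int (- int N - 1)} f"
    by (rule L1_int_shift[OF assms])
  have b: "set_integrable lborel {-pi + 2*pi*real_of_int (int N + 1) .. pi + 2*pi*real_of_int (int N + 1)} f"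
    by (rule L1_int_shift[OF assms])
  have "{-pi - 2*pi*real (Suc N) .. pi + 2*pi*real (Suc N)} =
      ({-pi + 2*pi*real_of_int (- int N - 1) .. pi + 2*pi*real_of_int (- int N - 1)} \<union>
       {-pi - 2*pi*real N .. pi + 2*pi*real N}) \<union>
       {-pi + 2*pi*real_of_int (int N + 1) .. pi + 2*pi*real_of_int (int N + 1)}"
  proof -
    have nn: "0 \<le> pi * (real N * 2)" by simp
    show ?thesis using pi_gt3 by (auto simp: algebra_simps; smt (verit) nn)
  qed
  moreover have "set_integrable lborel (({-pi + 2*pi*real_of_int (- int N - 1) .. pi + 2*pi*real_of_int (- int N - 1)} \<union>
       {-pi - 2*pi*real N .. pi + 2*pi*real N}) \<union>
       {-pi + 2*pi*real_of_int (int N + 1) .. pi + 2*pi*real_of_int (int N + 1)}) f"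
    by (intro set_integrable_Un a b Suc) auto
  ultimately show ?case by simp
qed

lemma L1_int:
  assumes "L1 f"
  shows "set_integrable lborel {a..b} f"
proof -
  obtain N :: nat where N: "real N \<ge> \<bar>a\<bar> + \<bar>b\<bar>" using real_arch_simple by blast
  have "pi \<ge> 1" using pi_gt3 by simp
  then have "2*pi*real N \<ge> real N" using mult_left_mono[of 1 "2*pi" "real N"] by (simp add: algebra_simps)
  then have "{a..b} \<subseteq> {-pi - 2*pi*real N .. pi + 2*pi*real N}"
    using N \<open>pi \<ge> 1\<close> by auto
  then show ?thesis using set_integrable_subset[OF L1_int_big[OF assms, of N]] by auto
qed

lemma SI_mult_cont:
  fixes g h :: "real \<Rightarrow> real"
  assumes g: "set_integrable lborel {a..b} g" and h: "continuous_on {a..b} h"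
  shows "set_integrable lborel {a..b} (\<lambda>t. g t * h t)"
proof -
  have "compact (h ` {a..b})" by (rule compact_continuous_image[OF h]) simp
  then obtain B where B: "B > 0" "\<forall>y\<in>h ` {a..b}. norm y \<le> B"
    using compact_imp_bounded bounded_pos by metis
  have m1: "(\<lambda>x. indicator {a..b} x *\<^sub>R g x) \<in> borel_measurable lborel"
    using g unfolding set_integrable_def by (rule borel_measurable_integrable)
  have m2: "(\<lambda>x. indicator {a..b} x *\<^sub>R h x) \<in> borel_measurable lborel"
    using borel_measurable_continuous_on_indicator[OF _ h] by simp
  have "(\<lambda>x. indicator {a..b} x *\<^sub>R (g x * h x)) = (\<lambda>x. (indicator {a..b} x *\<^sub>R g x) * (indicator {a..b} x *\<^sub>R h x))"
    by (auto simp: indicator_def)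
  then have m: "set_borel_measurable lborel {a..b} (\<lambda>t. g t * h t)"
    unfolding set_borel_measurable_def using m1 m2 by simp
  show ?thesis
  proof (rule set_integrable_bound[OF _ m])
    show "set_integrable lborel {a..b} (\<lambda>t. B * g t)" using g by simp
    show "AE x in lborel. x \<in> {a..b} \<longrightarrow> norm (g x * h x) \<le> norm (B * g x)"
    proof (rule AE_I2, rule impI)
      fix x assume "x \<in> {a..b}"
      then have "\<bar>h x\<bar> \<le> B" using B by auto
      then show "norm (g x * h x) \<le> norm (B * g x)"
        using B mult_left_mono[of "\<bar>h x\<bar>" B "\<bar>g x\<bar>"] by (simp add: abs_mult mult.commute)
    qed
  qed
qed

lemma SI_shift:
  fixes f :: "real \<Rightarrow> real"
  assumes "L1 f"
  shows "set_integrable lborel {a..b} (\<lambda>t. f (x + t))" "set_integrable lborel {a..b} (\<lambda>t. f (x - t))"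
proof -
  have i: "integrable lborel (\<lambda>y. indicator {x+a..x+b} y *\<^sub>R f y)"
    using L1_int[OF assms] unfolding set_integrable_def by auto
  have "integrable lborel (\<lambda>t. indicator {x+a..x+b} (x + 1 * t) *\<^sub>R f (x + 1 * t))"
    by (rule lborel_integrable_real_affine[OF i]) simp
  moreover have "(\<lambda>t. indicator {x+a..x+b} (x + 1 * t) *\<^sub>R f (x + 1 * t)) = (\<lambda>t. indicator {a..b} t *\<^sub>R f (x + t))"
    by (auto simp: indicator_def)
  ultimately show "set_integrable lborel {a..b} (\<lambda>t. f (x + t))" unfolding set_integrable_def by simp
  have i: "integrable lborel (\<lambda>y. indicator {x-b..x-a} y *\<^sub>R f y)"
    using L1_int[OF assms] unfolding set_integrable_def by auto
  have "integrable lborel (\<lambda>t. indicator {x-b..x-a} (x + (-1) * t) *\<^sub>R f (x + (-1) * t))"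
    by (rule lborel_integrable_real_affine[OF i]) simp
  moreover have "(\<lambda>t. indicator {x-b..x-a} (x + (-1) * t) *\<^sub>R f (x + (-1) * t)) = (\<lambda>t. indicator {a..b} t *\<^sub>R f (x - t))"
    by (auto simp: indicator_def)
  ultimately show "set_integrable lborel {a..b} (\<lambda>t. f (x - t))" unfolding set_integrable_def by simp
qed

lemma SI_psi:
  assumes "L1 f"
  shows "set_integrable lborel {a..b} (psi f x)"
  unfolding psi_def using SI_shift[OF assms] by (intro set_integral_diff) auto

lemma SI_abs_psi:
  assumes "L1 f"
  shows "set_integrable lborel {a..b} (\<lambda>t. \<bar>psi f x t\<bar>)"
  using set_integrable_abs[OF SI_psi[OF assms]] .

lemma SI_HK:
  fixes g :: "real \<Rightarrow> real"
  assumes "set_integrable lborel {a..b} g"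
  shows "g integrable_on {a..b}" "(LINT t:{a..b}|lborel. g t) = integral {a..b} g"
  using set_borel_integral_eq_integral[OF assms] by auto

section \<open>Fourier representation\<close>

lemma per_integral:
  fixes Q :: "real \<Rightarrow> real"
  assumes per: "\<And>u. Q (u + 2 * pi) = Q u" and int: "\<And>a b. Q integrable_on {a..b}"
  shows "integral {c..c + 2*pi} Q = integral {-pi..pi} Q"
proof -
  define J where "J a = integral {a..a + 2*pi} Q" for a
  have step: "J (a + s) = J a" if "0 \<le> s" "s \<le> 2*pi" for a s
  proof -
    have e1: "integral {a..a+s} Q + integral {a+s..a+2*pi} Q = J a"
      unfolding J_def using Henstock_Kurzweil_Integration.integral_combine[where a=a and c="a+s" and b="a+2*pi" and f=Q] that int by auto
    have e2: "integral {a+s..a+2*pi} Q + integral {a+2*pi..a+s+2*pi} Q = J (a + s)"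
      unfolding J_def using Henstock_Kurzweil_Integration.integral_combine[where a="a+s" and c="a+2*pi" and b="a+s+2*pi" and f=Q] that int by auto
    have "Q \<circ> (+) (2*pi) = Q" using per by (auto simp: add.commute)
    then have "integral {a+2*pi..a+s+2*pi} Q = integral {a..a+s} Q"
      using integral_shift_Icc_real[of a "a+s" Q "2*pi"] by (simp add: add.commute add.left_commute)
    then show ?thesis using e1 e2 by simp
  qed
  have Jper: "J (a + 2 * pi) = J a" for a using step[of "2*pi" a] by simp
  define m where "m = \<lfloor>(c + pi) / (2*pi)\<rfloor>"
  define s where "s = (c + pi) - 2*pi*real_of_int m"
  have m1: "real_of_int m \<le> (c + pi) / (2*pi)" unfolding m_def by simp
  have m2: "(c + pi) / (2*pi) < real_of_int m + 1" unfolding m_def by simp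
  have "2*pi*real_of_int m \<le> c + pi" using m1 pi_gt_zero by (simp add: field_simps)
  then have s0: "0 \<le> s" unfolding s_def by simp
  have "c + pi < 2*pi*(real_of_int m + 1)" using m2 pi_gt_zero by (simp add: field_simps)
  then have s1: "s \<le> 2*pi" unfolding s_def by (simp add: algebra_simps)
  have "c = (-pi + 2*pi*real_of_int m) + s" unfolding s_def by simp
  then have "J c = J (-pi + 2*pi*real_of_int m)" using step[OF s0 s1] by simp
  also have "\<dots> = J (-pi)" by (rule periodic_int[where f=J]) (rule Jper)
  finally show ?thesis unfolding J_def by simp
qed

lemma sin_nat_per: "sin (real \<nu> * (u + 2 * pi)) = sin (real \<nu> * u)"
proof -
  have "real \<nu> * (u + 2 * pi) = real \<nu> * u + 2 * pi * real_of_int (int \<nu>)" by (simp add: algebra_simps)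
  then show ?thesis using periodic_int[of sin "real \<nu> * u" "int \<nu>"] by simp
qed

lemma integrable_psi_cont:
  assumes "L1 f" "continuous_on {a..b} h"
  shows "(\<lambda>t. psi f x t * h t) integrable_on {a..b}"
  using SI_HK(1)[OF SI_mult_cont[OF SI_psi[OF assms(1)] assms(2)]] .

lemma coef_rep:
  assumes L: "L1 f"
  shows "fourier_a f \<nu> * sin (real \<nu> * x) - fourier_b f \<nu> * cos (real \<nu> * x)
     = - (1 / pi) * integral {0..pi} (\<lambda>t. psi f x t * sin (real \<nu> * t))"
proof -
  have per: "f (y + 2*pi) = f y" for y using L unfolding L1_def by auto
  have ca: "(\<lambda>t. f t * cos (real \<nu> * t)) integrable_on {-pi..pi}"
    "fourier_a f \<nu> = (1/pi) * integral {-pi..pi} (\<lambda>t. f t * cos (real \<nu> * t))"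
  proof -
    have "continuous_on {-pi..pi} (\<lambda>t. cos (real \<nu> * t))" by (auto intro!: continuous_intros)
    from SI_HK[OF SI_mult_cont[OF L1_int[OF L] this]] show "(\<lambda>t. f t * cos (real \<nu> * t)) integrable_on {-pi..pi}"
      "fourier_a f \<nu> = (1/pi) * integral {-pi..pi} (\<lambda>t. f t * cos (real \<nu> * t))"
      unfolding fourier_a_def by auto
  qed
  have sb: "(\<lambda>t. f t * sin (real \<nu> * t)) integrable_on {-pi..pi}"
    "fourier_b f \<nu> = (1/pi) * integral {-pi..pi} (\<lambda>t. f t * sin (real \<nu> * t))"
  proof -
    have "continuous_on {-pi..pi} (\<lambda>t. sin (real \<nu> * t))" by (auto intro!: continuous_intros)
    from SI_HK[OF SI_mult_cont[OF L1_int[OF L] this]] show "(\<lambda>t. f t * sin (real \<nu> * t)) integrable_on {-pi..pi}"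
      "fourier_b f \<nu> = (1/pi) * integral {-pi..pi} (\<lambda>t. f t * sin (real \<nu> * t))"
      unfolding fourier_b_def by auto
  qed
  define Q where "Q u = f (x + u) * sin (real \<nu> * u)" for u
  have Qint: "Q integrable_on {a..b}" for a b
    unfolding Q_def by (rule SI_HK(1)[OF SI_mult_cont[OF SI_shift(1)[OF L]]]) (auto intro!: continuous_intros)
  have Qper: "Q (u + 2*pi) = Q u" for u
    unfolding Q_def using per[of "x + u"] sin_nat_per[of \<nu> u] by (simp add: add.assoc)
  have "fourier_a f \<nu> * sin (real \<nu> * x) - fourier_b f \<nu> * cos (real \<nu> * x)
      = (1/pi) * (integral {-pi..pi} (\<lambda>t. f t * cos (real \<nu> * t)) * sin (real \<nu> * x)
          - integral {-pi..pi} (\<lambda>t. f t * sin (real \<nu> * t)) * cos (real \<nu> * x))"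
    using ca sb by (simp add: algebra_simps)
  also have "integral {-pi..pi} (\<lambda>t. f t * cos (real \<nu> * t)) * sin (real \<nu> * x)
          - integral {-pi..pi} (\<lambda>t. f t * sin (real \<nu> * t)) * cos (real \<nu> * x)
      = integral {-pi..pi} (\<lambda>t. f t * cos (real \<nu> * t) * sin (real \<nu> * x)
          - f t * sin (real \<nu> * t) * cos (real \<nu> * x))"
    by (subst integral_diff) (use ca sb integrable_on_mult_left in auto)
  also have "\<dots> = integral {-pi..pi} (\<lambda>t. - (f t * sin (real \<nu> * (t - x))))"
    by (rule integral_cong) (simp add: sin_diff algebra_simps)
  also have "\<dots> = - integral {-pi..pi} (\<lambda>t. f t * sin (real \<nu> * (t - x)))" by simp
  also have "integral {-pi..pi} (\<lambda>t. f t * sin (real \<nu> * (t - x))) = integral {-pi-x..pi-x} Q"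
  proof -
    have "Q = (\<lambda>u. f (x + u) * sin (real \<nu> * u))" by (simp add: Q_def fun_eq_iff)
    then show ?thesis
      using integral_shift_Icc_real[of "-pi-x" "pi-x" "\<lambda>t. f t * sin (real \<nu> * (t - x))" x]
      by (simp add: o_def)
  qed
  also have "\<dots> = integral {-pi..pi} Q"
    using per_integral[of Q "-pi-x", OF Qper Qint] by (simp add: algebra_simps)
  also have "\<dots> = integral {-pi..0} Q + integral {0..pi} Q"
    by (rule Henstock_Kurzweil_Integration.integral_combine[symmetric]) (use Qint in auto)
  also have "integral {-pi..0} Q = integral {0..pi} (\<lambda>u. Q (- u))"
    using Henstock_Kurzweil_Integration.integral_reflect_real[where a=0 and b=pi and f="\<lambda>u. Q (- u)"] by simp
  also have "integral {0..pi} (\<lambda>u. Q (- u)) + integral {0..pi} Q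
      = integral {0..pi} (\<lambda>t. psi f x t * sin (real \<nu> * t))"
  proof -
    have "(\<lambda>u. Q (- u)) integrable_on {0..pi}"
      using Qint[of "-pi" 0] Henstock_Kurzweil_Integration.integrable_reflect_real[where f="\<lambda>u. Q (- u)" and a=0 and b=pi] by simp
    then have "integral {0..pi} (\<lambda>u. Q (- u)) + integral {0..pi} Q = integral {0..pi} (\<lambda>u. Q (- u) + Q u)"
      by (subst integral_add) (use Qint in auto)
    also have "\<dots> = integral {0..pi} (\<lambda>t. psi f x t * sin (real \<nu> * t))"
      by (rule integral_cong) (simp add: Q_def psi_def algebra_simps)
    finally show ?thesis .
  qed
  finally show ?thesis by simp
qed

section \<open>Kernels\<close>

definition Dk :: "nat \<Rightarrow> real \<Rightarrow> real" where
  "Dk k t = (\<Sum>\<nu>\<in>{1..k}. sin (real \<nu> * t))"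

definition Kn :: "(nat \<Rightarrow> nat \<Rightarrow> real) \<Rightarrow> (nat \<Rightarrow> nat \<Rightarrow> real) \<Rightarrow> nat \<Rightarrow> real \<Rightarrow> real" where
  "Kn a b n t = (\<Sum>r=0..n. \<Sum>k=0..r. a n r * b r k * Dk k t)"

definition Hn :: "(nat \<Rightarrow> nat \<Rightarrow> real) \<Rightarrow> (nat \<Rightarrow> nat \<Rightarrow> real) \<Rightarrow> nat \<Rightarrow> real \<Rightarrow> real" where
  "Hn a b n t = (\<Sum>r=0..n. \<Sum>k=0..r. a n r * b r k * cos ((real k + 1/2) * t))"

lemma cont_Dk: "continuous_on S (Dk k)"
  unfolding Dk_def by (auto intro!: continuous_intros)

lemma cont_Kn: "continuous_on S (Kn a b n)"
  unfolding Kn_def Dk_def by (auto intro!: continuous_intros)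

lemma cont_Hn: "continuous_on S (Hn a b n)"
  unfolding Hn_def by (auto intro!: continuous_intros)

lemma partial_rep:
  assumes L: "L1 f"
  shows "conj_partial_sum f k x = - (1 / pi) * integral {0..pi} (\<lambda>t. psi f x t * Dk k t)"
proof -
  have int: "(\<lambda>t. psi f x t * sin (real \<nu> * t)) integrable_on {0..pi}" for \<nu>
    by (rule integrable_psi_cont[OF L]) (auto intro!: continuous_intros)
  have "conj_partial_sum f k x = (\<Sum>\<nu>\<in>{1..k}. - (1 / pi) * integral {0..pi} (\<lambda>t. psi f x t * sin (real \<nu> * t)))"
    unfolding conj_partial_sum_def using coef_rep[OF L] by simp
  also have "\<dots> = - (1 / pi) * (\<Sum>\<nu>\<in>{1..k}. integral {0..pi} (\<lambda>t. psi f x t * sin (real \<nu> * t)))"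
    by (simp add: sum_distrib_left)
  also have "(\<Sum>\<nu>\<in>{1..k}. integral {0..pi} (\<lambda>t. psi f x t * sin (real \<nu> * t)))
     = integral {0..pi} (\<lambda>t. \<Sum>\<nu>\<in>{1..k}. psi f x t * sin (real \<nu> * t))"
    by (rule integral_sum[symmetric]) (use int in auto)
  also have "\<dots> = integral {0..pi} (\<lambda>t. psi f x t * Dk k t)"
    unfolding Dk_def by (simp add: sum_distrib_left)
  finally show ?thesis .
qed

lemma T_rep:
  assumes L: "L1 f"
  shows "T_AB a b f n x = - (1 / pi) * integral {0..pi} (\<lambda>t. psi f x t * Kn a b n t)"
proof -
  have int: "(\<lambda>t. psi f x t * Dk k t) integrable_on {0..pi}" for k
    by (rule integrable_psi_cont[OF L cont_Dk])
  have "T_AB a b f n x = (\<Sum>r=0..n. \<Sum>k=0..r. a n r * b r k * (- (1 / pi) * integral {0..pi} (\<lambda>t. psi f x t * Dk k t)))"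
    unfolding T_AB_def using partial_rep[OF L] by simp
  also have "\<dots> = - (1 / pi) * (\<Sum>r=0..n. \<Sum>k=0..r. a n r * b r k * integral {0..pi} (\<lambda>t. psi f x t * Dk k t))"
    by (simp add: sum_distrib_left algebra_simps)
  also have "\<dots> = - (1 / pi) * (\<Sum>r=0..n. \<Sum>k=0..r. integral {0..pi} (\<lambda>t. a n r * b r k * (psi f x t * Dk k t)))"
    by (simp only: integral_mult_right)
  also have "(\<Sum>r=0..n. \<Sum>k=0..r. integral {0..pi} (\<lambda>t. a n r * b r k * (psi f x t * Dk k t)))
     = (\<Sum>r=0..n. integral {0..pi} (\<lambda>t. \<Sum>k=0..r. a n r * b r k * (psi f x t * Dk k t)))"
    by (intro sum.cong refl integral_sum[symmetric]) (use int in \<open>auto intro!: integrable_on_mult_right\<close>)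
  also have "\<dots> = integral {0..pi} (\<lambda>t. \<Sum>r=0..n. \<Sum>k=0..r. a n r * b r k * (psi f x t * Dk k t))"
    by (rule integral_sum[symmetric]) (use int in \<open>auto intro!: integrable_sum integrable_on_mult_right\<close>)
  also have "\<dots> = integral {0..pi} (\<lambda>t. psi f x t * Kn a b n t)"
    unfolding Kn_def by (simp add: sum_distrib_left algebra_simps)
  finally show ?thesis .
qed

lemma Dk_twice: "2 * sin (t/2) * Dk k t = cos (t/2) - cos ((real k + 1/2) * t)"
proof (induction k)
  case 0 then show ?case by (simp add: Dk_def)
next
  case (Suc k)
  have "Dk (Suc k) t = Dk k t + sin (real (Suc k) * t)" by (simp add: Dk_def)
  moreover have "2 * sin (t/2) * sin (real (Suc k) * t) = cos ((real k + 1/2) * t) - cos ((real (Suc k) + 1/2) * t)"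
  proof -
    have e1: "(real k + 1/2) * t = real (Suc k) * t - t/2" by (simp add: algebra_simps)
    have e2: "(real (Suc k) + 1/2) * t = real (Suc k) * t + t/2" by (simp add: algebra_simps)
    show ?thesis unfolding e1 e2 cos_add cos_diff by (simp add: algebra_simps)
  qed
  ultimately show ?case using Suc by (simp add: algebra_simps)
qed

lemma Dk_formula:
  assumes "sin (t/2) \<noteq> 0"
  shows "Dk k t = cos (t/2) / (2 * sin (t/2)) - cos ((real k + 1/2) * t) / (2 * sin (t/2))"
  using Dk_twice[of t k] assms by (simp add: field_simps)

lemma Kn_formula:
  assumes "sin (t/2) \<noteq> 0" and A: "admissible_matrix a" and B: "admissible_matrix b"
  shows "Kn a b n t - (1/2) * cot (t/2) = - Hn a b n t / (2 * sin (t/2))"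
proof -
  have sb: "(\<Sum>k=0..r. b r k) = 1" for r using B unfolding admissible_matrix_def by auto
  have sa: "(\<Sum>r=0..n. a n r) = 1" using A unfolding admissible_matrix_def by auto
  let ?c = "cos (t/2) / (2 * sin (t/2))"
  have "Kn a b n t = (\<Sum>r=0..n. \<Sum>k=0..r. a n r * b r k * ?c)
      - (\<Sum>r=0..n. \<Sum>k=0..r. a n r * b r k * cos ((real k + 1/2) * t)) / (2 * sin (t/2))"
    unfolding Kn_def Dk_formula[OF assms(1)]
    by (simp add: sum_subtractf sum_divide_distrib right_diff_distrib)
  also have "(\<Sum>r=0..n. \<Sum>k=0..r. a n r * b r k * ?c) = (\<Sum>r=0..n. a n r * (\<Sum>k=0..r. b r k)) * ?c"
    by (simp add: sum_distrib_left sum_distrib_right mult.assoc sum_divide_distrib)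
  also have "\<dots> = ?c" by (simp add: sb sa)
  finally show ?thesis unfolding Hn_def cot_def by (simp add: field_simps)
qed

lemma prod_sum_sc: "2 * sin (t/2) * cos (y::real) = sin (y + t/2) - sin (y - t/2)"
  by (simp add: sin_add sin_diff)

lemma geo_cos_twice:
  "2 * sin (t/2) * (\<Sum>q\<in>{p..p+m}. cos ((real q + c) * t))
     = sin ((real (p+m) + c + 1/2) * t) - sin ((real p + c - 1/2) * t)"
proof (induction m)
  case 0
  have e1: "sin ((real (p+0) + c + 1/2) * t) = sin ((real p + c) * t + t/2)"
    by (rule arg_cong[where f=sin]) (simp add: algebra_simps)
  have e2: "sin ((real p + c - 1/2) * t) = sin ((real p + c) * t - t/2)"
    by (rule arg_cong[where f=sin]) (simp add: algebra_simps)
  show ?case unfolding e1 e2 using prod_sum_sc[of t "(real p + c) * t"] by simp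
next
  case (Suc m)
  have "(\<Sum>q\<in>{p..p+Suc m}. cos ((real q + c) * t)) = (\<Sum>q\<in>{p..p+m}. cos ((real q + c) * t)) + cos ((real (p + Suc m) + c) * t)"
    by simp
  moreover have "2 * sin (t/2) * cos ((real (p + Suc m) + c) * t)
     = sin ((real (p + Suc m) + c + 1/2) * t) - sin ((real (p+m) + c + 1/2) * t)"
  proof -
    have e1: "sin ((real (p + Suc m) + c + 1/2) * t) = sin ((real (p + Suc m) + c) * t + t/2)"
      by (rule arg_cong[where f=sin]) (simp add: algebra_simps)
    have e2: "sin ((real (p+m) + c + 1/2) * t) = sin ((real (p + Suc m) + c) * t - t/2)"
      by (rule arg_cong[where f=sin]) (simp add: algebra_simps)
    show ?thesis unfolding e1 e2 by (rule prod_sum_sc)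
  qed
  ultimately show ?case using Suc by (simp add: algebra_simps)
qed

lemma geo_cos:
  assumes s: "sin (t/2) > 0"
  shows "\<bar>\<Sum>q\<in>{p..r}. cos ((real q + c) * t)\<bar> \<le> 1 / sin (t/2)"
proof (cases "p \<le> r")
  case True
  then have "r = p + (r - p)" by simp
  then have "2 * sin (t/2) * (\<Sum>q\<in>{p..r}. cos ((real q + c) * t))
      = sin ((real r + c + 1/2) * t) - sin ((real p + c - 1/2) * t)"
    using geo_cos_twice[where t=t and p=p and m="r - p" and c=c] by metis
  moreover have "\<bar>sin ((real r + c + 1/2) * t) - sin ((real p + c - 1/2) * t)\<bar> \<le> 2"
    using abs_sin_le_one[of "(real r + c + 1/2) * t"] abs_sin_le_one[of "(real p + c - 1/2) * t"] by linarith
  ultimately have "2 * sin (t/2) * \<bar>\<Sum>q\<in>{p..r}. cos ((real q + c) * t)\<bar> \<le> 2"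
    using s by (simp add: abs_mult)
  then show ?thesis using s by (simp add: field_simps)
next
  case False
  then show ?thesis using s by simp
qed

lemma abel_sum:
  fixes c \<phi> :: "nat \<Rightarrow> real"
  shows "(\<Sum>r\<in>{p..p+m}. c r * \<phi> r)
     = (\<Sum>r\<in>{p..<p+m}. (c r - c (Suc r)) * (\<Sum>q\<in>{p..r}. \<phi> q)) + c (p+m) * (\<Sum>q\<in>{p..p+m}. \<phi> q)"
proof (induction m)
  case 0 then show ?case by simp
next
  case (Suc m)
  have "(\<Sum>r\<in>{p..p+Suc m}. c r * \<phi> r) = (\<Sum>r\<in>{p..p+m}. c r * \<phi> r) + c (p + Suc m) * \<phi> (p + Suc m)"
    by simp
  moreover have "(\<Sum>r\<in>{p..<p+Suc m}. (c r - c (Suc r)) * (\<Sum>q\<in>{p..r}. \<phi> q))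
      = (\<Sum>r\<in>{p..<p+m}. (c r - c (Suc r)) * (\<Sum>q\<in>{p..r}. \<phi> q)) + (c (p+m) - c (p + Suc m)) * (\<Sum>q\<in>{p..p+m}. \<phi> q)"
    by simp
  moreover have "(\<Sum>q\<in>{p..p+Suc m}. \<phi> q) = (\<Sum>q\<in>{p..p+m}. \<phi> q) + \<phi> (p + Suc m)" by simp
  ultimately show ?case using Suc by (simp add: algebra_simps)
qed

lemma abel_bound:
  fixes c \<phi> :: "nat \<Rightarrow> real"
  assumes "p \<le> n" and bd: "\<And>r. \<bar>\<Sum>q\<in>{p..r}. \<phi> q\<bar> \<le> B"
  shows "\<bar>\<Sum>r\<in>{p..n}. c r * \<phi> r\<bar> \<le> B * ((\<Sum>r\<in>{p..<n}. \<bar>c r - c (Suc r)\<bar>) + \<bar>c n\<bar>)"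
proof -
  have n: "n = p + (n - p)" using assms by simp
  have eq: "(\<Sum>r\<in>{p..n}. c r * \<phi> r)
     = (\<Sum>r\<in>{p..<n}. (c r - c (Suc r)) * (\<Sum>q\<in>{p..r}. \<phi> q)) + c n * (\<Sum>q\<in>{p..n}. \<phi> q)"
    using abel_sum[of c \<phi> p "n - p"] n by metis
  have B0: "0 \<le> B" using bd[of p] by linarith
  have "\<bar>\<Sum>r\<in>{p..<n}. (c r - c (Suc r)) * (\<Sum>q\<in>{p..r}. \<phi> q)\<bar>
      \<le> (\<Sum>r\<in>{p..<n}. \<bar>c r - c (Suc r)\<bar> * B)"
    by (rule order_trans[OF sum_abs]) (auto simp: abs_mult intro!: sum_mono mult_left_mono bd)
  moreover have "\<bar>c n * (\<Sum>q\<in>{p..n}. \<phi> q)\<bar> \<le> \<bar>c n\<bar> * B"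
    by (auto simp: abs_mult intro!: mult_left_mono bd)
  ultimately show ?thesis unfolding eq
    by (simp add: sum_distrib_left sum_distrib_right algebra_simps)
qed

lemma tri_swap:
  fixes h :: "nat \<Rightarrow> nat \<Rightarrow> real"
  assumes "m \<le> n"
  shows "(\<Sum>l\<in>{0..n}. \<Sum>r\<in>{max k l..m}. h l r) = (\<Sum>r\<in>{k..m}. \<Sum>l\<in>{0..r}. h l r)"
proof -
  have "(\<Sum>r\<in>{k..m}. \<Sum>l\<in>{l. l \<in> {0..n} \<and> l \<le> r}. h l r)
      = (\<Sum>l\<in>{0..n}. \<Sum>r\<in>{r. r \<in> {k..m} \<and> l \<le> r}. h l r)"
    by (rule sum.swap_restrict) auto
  moreover have "\<And>r. r \<in> {k..m} \<Longrightarrow> {l. l \<in> {0..n} \<and> l \<le> r} = {0..r}" using assms by auto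
  moreover have "\<And>l. {r. r \<in> {k..m} \<and> l \<le> r} = {max k l..m}" by auto
  ultimately show ?thesis by simp
qed

lemma H_tail:
  assumes A: "admissible_matrix a" and B: "admissible_matrix b"
   and iii: "\<forall>n r l. l \<le> r \<and> r + 1 \<le> n \<longrightarrow>
            \<bar>a n r * b r (r - l) - a n (r + 1) * b (r + 1) (r + 1 - l)\<bar>
              \<le> K3 * a n r / (real r + 1)^2"
   and s: "sin (t/2) > 0" and k: "1 \<le> k" "k \<le> n"
  shows "\<bar>\<Sum>r\<in>{k..n}. \<Sum>j\<in>{0..r}. a n r * b r j * cos ((real j + 1/2) * t)\<bar>
     \<le> (1 / sin (t/2)) * (K3 * (\<Sum>r\<in>{k..<n}. a n r / (real r + 1)) + a n n)"
proof -
  have an: "0 \<le> a n r" if "r \<le> n" for r using A that unfolding admissible_matrix_def by auto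
  have bn: "0 \<le> b r j" if "j \<le> r" for r j using B that unfolding admissible_matrix_def by auto
  have sb: "(\<Sum>j=0..r. b r j) = 1" for r using B unfolding admissible_matrix_def by auto
  define G where "G r j = a n r * b r j * cos ((real j + 1/2) * t)" for r j
  define X where "X l = (\<Sum>r\<in>{max k l..n}. G r (r - l))" for l
  have e1: "(\<Sum>r\<in>{k..n}. \<Sum>j\<in>{0..r}. G r j) = (\<Sum>r\<in>{k..n}. \<Sum>l\<in>{0..r}. G r (r - l))"
  proof (rule sum.cong[OF refl])
    fix r show "(\<Sum>j\<in>{0..r}. G r j) = (\<Sum>l\<in>{0..r}. G r (r - l))"
      using sum.atLeastAtMost_rev[of "G r" 0 r] by simp
  qed
  have e2: "(\<Sum>r\<in>{k..n}. \<Sum>l\<in>{0..r}. G r (r - l)) = (\<Sum>l\<in>{0..n}. X l)"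
    using tri_swap[where m=n and n=n and h="\<lambda>l r. G r (r - l)" and k=k] unfolding X_def by simp
  have s0: "0 \<le> 1 / sin (t/2)" using s by simp
  have bl: "\<bar>X l\<bar> \<le> (1 / sin (t/2)) * ((\<Sum>r\<in>{max k l..<n}. K3 * a n r / (real r + 1)^2) + a n n * b n (n - l))"
    if l: "l \<le> n" for l
  proof -
    define c where "c r = a n r * b r (r - l)" for r
    define \<phi> where "\<phi> r = cos ((real r + (1/2 - real l)) * t)" for r
    have "X l = (\<Sum>r\<in>{max k l..n}. c r * \<phi> r)"
      unfolding X_def G_def c_def \<phi>_def by (rule sum.cong) (auto simp: of_nat_diff algebra_simps)
    also have "\<bar>\<dots>\<bar> \<le> (1 / sin (t/2)) * ((\<Sum>r\<in>{max k l..<n}. \<bar>c r - c (Suc r)\<bar>) + \<bar>c n\<bar>)"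
      by (rule abel_bound) (use l k in \<open>auto simp: \<phi>_def intro: geo_cos[OF s]\<close>)
    also have "\<dots> \<le> (1 / sin (t/2)) * ((\<Sum>r\<in>{max k l..<n}. K3 * a n r / (real r + 1)^2) + a n n * b n (n - l))"
    proof (rule mult_left_mono[OF _ s0], rule add_mono)
      show "(\<Sum>r\<in>{max k l..<n}. \<bar>c r - c (Suc r)\<bar>) \<le> (\<Sum>r\<in>{max k l..<n}. K3 * a n r / (real r + 1)^2)"
      proof (rule sum_mono)
        fix r assume "r \<in> {max k l..<n}"
        then have "l \<le> r \<and> r + 1 \<le> n" by auto
        then show "\<bar>c r - c (Suc r)\<bar> \<le> K3 * a n r / (real r + 1)^2"
          using iii unfolding c_def by (auto simp del: of_nat_Suc)
      qed
      show "\<bar>c n\<bar> \<le> a n n * b n (n - l)" unfolding c_def using an[of n] bn[of "n - l" n] by simp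
    qed
    finally show ?thesis .
  qed
  have "\<bar>\<Sum>l\<in>{0..n}. X l\<bar> \<le> (\<Sum>l\<in>{0..n}. (1 / sin (t/2)) * ((\<Sum>r\<in>{max k l..<n}. K3 * a n r / (real r + 1)^2) + a n n * b n (n - l)))"
    by (rule order_trans[OF sum_abs], rule sum_mono) (use bl in auto)
  also have "\<dots> = (1 / sin (t/2)) * ((\<Sum>l\<in>{0..n}. \<Sum>r\<in>{max k l..<n}. K3 * a n r / (real r + 1)^2) + a n n * (\<Sum>l\<in>{0..n}. b n (n - l)))"
    by (simp only: sum_distrib_left[symmetric] sum.distrib)
  also have "(\<Sum>l\<in>{0..n}. b n (n - l)) = 1"
    using sum.atLeastAtMost_rev[of "b n" 0 n] sb[of n] by simp
  also have "(\<Sum>l\<in>{0..n}. \<Sum>r\<in>{max k l..<n}. K3 * a n r / (real r + 1)^2) = K3 * (\<Sum>r\<in>{k..<n}. a n r / (real r + 1))"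
  proof -
    obtain m where m: "n = Suc m" using k by (cases n) auto
    have "(\<Sum>l\<in>{0..n}. \<Sum>r\<in>{max k l..<n}. K3 * a n r / (real r + 1)^2)
        = (\<Sum>l\<in>{0..n}. \<Sum>r\<in>{max k l..m}. K3 * a n r / (real r + 1)^2)"
      unfolding m by (simp add: atLeastLessThanSuc_atLeastAtMost)
    also have "\<dots> = (\<Sum>r\<in>{k..m}. \<Sum>l\<in>{0..r}. K3 * a n r / (real r + 1)^2)"
      by (rule tri_swap) (simp add: m)
    also have "\<dots> = (\<Sum>r\<in>{k..m}. K3 * (a n r / (real r + 1)))"
    proof (rule sum.cong[OF refl])
      fix r
      have x: "(real r + 1) \<noteq> 0" by simp
      have "(\<Sum>l\<in>{0..r}. K3 * a n r / (real r + 1)^2) = (real r + 1) * (K3 * a n r / (real r + 1)^2)"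
        by simp
      also have "\<dots> = K3 * (a n r / (real r + 1))"
        using x by (simp add: power2_eq_square)
      finally show "(\<Sum>l\<in>{0..r}. K3 * a n r / (real r + 1)^2) = K3 * (a n r / (real r + 1))" .
    qed
    also have "\<dots> = K3 * (\<Sum>r\<in>{k..<n}. a n r / (real r + 1))"
      unfolding m by (simp add: atLeastLessThanSuc_atLeastAtMost sum_distrib_left)
    finally show ?thesis .
  qed
  finally have fin: "\<bar>\<Sum>l\<in>{0..n}. X l\<bar> \<le> (1 / sin (t/2)) * (K3 * (\<Sum>r\<in>{k..<n}. a n r / (real r + 1)) + a n n)"
    by simp
  have eqG: "(\<Sum>r\<in>{k..n}. \<Sum>j\<in>{0..r}. a n r * b r j * cos ((real j + 1/2) * t)) = (\<Sum>r\<in>{k..n}. \<Sum>j\<in>{0..r}. G r j)"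
    by (simp add: G_def)
  show ?thesis unfolding eqG e1 e2 using fin .
qed

section \<open>Elementary trigonometric bounds\<close>

lemma sin_ge_ycos:
  assumes "0 \<le> y" "y \<le> pi/2"
  shows "y * cos y \<le> sin y"
proof (cases "y = 0")
  case True then show ?thesis by simp
next
  case False
  then have "0 < y" using assms by simp
  from MVT2[OF this DERIV_sin]
  obtain z where z: "0 < z" "z < y" "sin y - sin 0 = (y - 0) * cos z" by auto
  have "cos y \<le> cos z" by (rule cos_monotone_0_pi_le) (use z assms pi_gt3 in auto)
  then have "y * cos y \<le> y * cos z" using \<open>0 < y\<close> by (simp add: mult_left_mono)
  then show ?thesis using z by simp
qed

lemma sin_ge_lin:
  assumes "0 \<le> y" "y \<le> pi/2"
  shows "y / pi \<le> sin y"
proof (cases "y \<le> pi/3")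
  case True
  have "cos (pi/3) \<le> cos y" by (rule cos_monotone_0_pi_le) (use True assms in auto)
  then have "1/2 \<le> cos y" by (simp add: cos_60)
  then have "y * (1/2) \<le> y * cos y" using mult_left_mono[OF \<open>1/2 \<le> cos y\<close>, of y] assms by simp
  moreover have "y / pi \<le> y / 2" by (rule divide_left_mono) (use assms pi_gt3 in auto)
  ultimately show ?thesis using sin_ge_ycos[OF assms] by linarith
next
  case False
  have "sin (pi/3) \<le> sin y" by (rule sin_monotone_2pi_le) (use False assms in auto)
  then have "sqrt 3 / 2 \<le> sin y" by (simp add: sin_60)
  moreover have "1 \<le> sqrt 3" by simp
  moreover have "y / pi \<le> 1/2" using assms pi_gt3 by (simp add: field_simps)
  ultimately show ?thesis by linarith
qed

lemma sin_half_lower: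
  assumes "0 \<le> t" "t \<le> pi"
  shows "t / (2*pi) \<le> sin (t/2)"
  using sin_ge_lin[of "t/2"] assms by (simp add: field_simps)

lemma half_cot_le:
  assumes "0 < t" "t \<le> pi"
  shows "0 \<le> (1/2) * cot (t/2)" "(1/2) * cot (t/2) \<le> 1 / t"
proof -
  have s: "0 < sin (t/2)" using assms by (intro sin_gt_zero) auto
  have c: "0 \<le> cos (t/2)" using assms by (intro cos_ge_zero) auto
  show "0 \<le> (1/2) * cot (t/2)" using s c by (simp add: cot_def)
  have "(t/2) * cos (t/2) \<le> sin (t/2)" using sin_ge_ycos[of "t/2"] assms by simp
  then show "(1/2) * cot (t/2) \<le> 1 / t" using s assms by (simp add: cot_def field_simps)
qed

lemma H_bound:
  assumes A: "admissible_matrix a" and B: "admissible_matrix b"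
   and iii: "\<forall>n r l. l \<le> r \<and> r + 1 \<le> n \<longrightarrow>
            \<bar>a n r * b r (r - l) - a n (r + 1) * b (r + 1) (r + 1 - l)\<bar>
              \<le> K3 * a n r / (real r + 1)^2"
   and K3: "K3 > 0"
   and k: "1 \<le> k" "k \<le> n" and t: "pi / (real k + 1) \<le> t" "t \<le> pi / real k"
  shows "\<bar>Hn a b n t\<bar> / (2 * sin (t/2)) \<le> (real k + 1) * (\<Sum>r\<in>{0..<k}. a n r)
           + 2 * (real k + 1)^2 * (K3 * (\<Sum>r\<in>{k..<n}. a n r / (real r + 1)) + a n n)"
proof -
  have an: "0 \<le> a n r" if "r \<le> n" for r using A that unfolding admissible_matrix_def by auto
  have bn: "0 \<le> b r j" if "j \<le> r" for r j using B that unfolding admissible_matrix_def by auto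
  have sb: "(\<Sum>j=0..r. b r j) = 1" for r using B unfolding admissible_matrix_def by auto
  have t0: "0 < t" using t(1) by (smt (verit) divide_pos_pos of_nat_0_le_iff pi_gt_zero)
  have kpos: "0 < real k" using k by simp
  have "pi * 1 \<le> pi * real k" using k(1) by (intro mult_left_mono) auto
  then have "pi / real k \<le> pi" using kpos by (simp add: divide_le_eq)
  then have tpi: "t \<le> pi" using t(2) by linarith
  have s: "0 < sin (t/2)" using t0 tpi by (intro sin_gt_zero) auto
  have sl: "t / (2*pi) \<le> sin (t/2)" using sin_half_lower t0 tpi by simp
  have "1 / (2 * (real k + 1)) \<le> t / (2*pi)" using t(1) pi_gt_zero by (simp add: field_simps)
  then have sl2: "1 / (2 * (real k + 1)) \<le> sin (t/2)" using sl by linarith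
  define u where "u = 1 / sin (t/2)"
  have u0: "0 < u" unfolding u_def using s by simp
  have u1: "u \<le> 2 * (real k + 1)"
  proof -
    have "1 / sin (t/2) \<le> 1 / (1 / (2 * (real k + 1)))"
      by (rule divide_left_mono[OF sl2]) (use s in auto)
    then show ?thesis unfolding u_def by simp
  qed
  define G where "G r j = a n r * b r j * cos ((real j + 1/2) * t)" for r j
  define Aa where "Aa = (\<Sum>r\<in>{0..<k}. a n r)"
  define Y where "Y = K3 * (\<Sum>r\<in>{k..<n}. a n r / (real r + 1)) + a n n"
  have Y0: "0 \<le> Y" unfolding Y_def using K3 an by (auto intro!: sum_nonneg add_nonneg_nonneg mult_nonneg_nonneg)
  have seq: "{0..n} = {0..<k} \<union> {k..n}" using k by auto
  have "Hn a b n t = (\<Sum>r\<in>{0..<k} \<union> {k..n}. \<Sum>j\<in>{0..r}. G r j)"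
    unfolding Hn_def G_def seq[symmetric] by simp
  also have "\<dots> = (\<Sum>r\<in>{0..<k}. \<Sum>j\<in>{0..r}. G r j) + (\<Sum>r\<in>{k..n}. \<Sum>j\<in>{0..r}. G r j)"
    by (rule sum.union_disjoint) auto
  finally have split: "Hn a b n t = (\<Sum>r\<in>{0..<k}. \<Sum>j\<in>{0..r}. G r j) + (\<Sum>r\<in>{k..n}. \<Sum>j\<in>{0..r}. G r j)" .
  have p1: "\<bar>\<Sum>r\<in>{0..<k}. \<Sum>j\<in>{0..r}. G r j\<bar> \<le> Aa"
  proof -
    have "\<bar>\<Sum>r\<in>{0..<k}. \<Sum>j\<in>{0..r}. G r j\<bar> \<le> (\<Sum>r\<in>{0..<k}. \<Sum>j\<in>{0..r}. a n r * b r j)"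
    proof (rule order_trans[OF sum_abs], rule sum_mono)
      fix r assume r: "r \<in> {0..<k}"
      show "\<bar>\<Sum>j\<in>{0..r}. G r j\<bar> \<le> (\<Sum>j\<in>{0..r}. a n r * b r j)"
      proof (rule order_trans[OF sum_abs], rule sum_mono)
        fix j assume j: "j \<in> {0..r}"
        have a0: "0 \<le> a n r" "0 \<le> b r j" using an[of r] bn[of j r] r j k by auto
        then have "\<bar>G r j\<bar> = (a n r * b r j) * \<bar>cos ((real j + 1/2) * t)\<bar>"
          unfolding G_def by (simp add: abs_mult)
        also have "\<dots> \<le> a n r * b r j"
          by (rule mult_left_le) (use a0 abs_cos_le_one in auto)
        finally show "\<bar>G r j\<bar> \<le> a n r * b r j" .
      qed
    qed
    also have "\<dots> = Aa" unfolding Aa_def by (simp add: sum_distrib_left[symmetric] sb)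
    finally show ?thesis .
  qed
  have p2: "\<bar>\<Sum>r\<in>{k..n}. \<Sum>j\<in>{0..r}. G r j\<bar> \<le> u * Y"
    unfolding G_def u_def Y_def by (rule H_tail[OF A B iii s k])
  have "\<bar>Hn a b n t\<bar> \<le> Aa + u * Y" using p1 p2 split by linarith
  then have "\<bar>Hn a b n t\<bar> / (2 * sin (t/2)) \<le> (Aa + u * Y) * u / 2"
    using s by (simp add: u_def divide_right_mono field_simps)
  also have "\<dots> = Aa * u / 2 + Y * (u * u) / 2" by (simp add: algebra_simps)
  also have "\<dots> \<le> Aa * (real k + 1) + Y * (2 * (real k + 1)^2)"
  proof (rule add_mono)
    have Aa0: "0 \<le> Aa" unfolding Aa_def using an k by (auto intro!: sum_nonneg)
    show "Aa * u / 2 \<le> Aa * (real k + 1)" using u1 Aa0 mult_left_mono[OF u1 Aa0] by (simp add: algebra_simps)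
    have "u * u \<le> (2 * (real k + 1)) * (2 * (real k + 1))" using u0 u1 by (intro mult_mono) auto
    then show "Y * (u * u) / 2 \<le> Y * (2 * (real k + 1)^2)"
      using Y0 mult_left_mono[of "u*u" "(2 * (real k + 1)) * (2 * (real k + 1))" Y] by (simp add: power2_eq_square algebra_simps)
  qed
  finally show ?thesis unfolding Aa_def Y_def by (simp add: algebra_simps)
qed

section \<open>Discrete estimates\<close>

lemma sum_by_parts1:
  fixes w F :: "nat \<Rightarrow> real"
  shows "(\<Sum>k\<in>{1..m}. w k * (F k - F (Suc k)))
     = (\<Sum>k\<in>{1..m}. (w k - w (k - 1)) * F k) + w 0 * F 1 - w m * F (Suc m)"
proof (induction m)
  case 0 then show ?case by simp
next
  case (Suc m)
  then show ?case by (simp add: algebra_simps)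
qed

lemma avg_mono:
  fixes W :: "nat \<Rightarrow> real"
  assumes dec: "\<And>k. 1 \<le> k \<Longrightarrow> W (Suc k) \<le> W k"
  shows "(\<Sum>j=0..r. W (j+1)) \<ge> (real r + 1) * W (r + 1)"
proof -
  have "W (r+1) \<le> W (j+1)" if "j \<le> r" for j
  proof -
    have "W (j + 1 + i) \<le> W (j+1)" for i
    proof (induction i)
      case 0 then show ?case by simp
    next
      case (Suc i)
      have "W (Suc (j + 1 + i)) \<le> W (j + 1 + i)" by (rule dec) simp
      then show ?case using Suc by simp
    qed
    from this[of "r - j"] that show ?thesis by simp
  qed
  then have "(\<Sum>j=0..r. W (r+1)) \<le> (\<Sum>j=0..r. W (j+1))" by (intro sum_mono) auto
  then show ?thesis by (simp add: add.commute)
qed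

lemma avg_dec:
  fixes W :: "nat \<Rightarrow> real"
  assumes dec: "\<And>k. 1 \<le> k \<Longrightarrow> W (Suc k) \<le> W k" and "r \<le> m"
  shows "(1 / (real m + 1)) * (\<Sum>j=0..m. W (j+1)) \<le> (1 / (real r + 1)) * (\<Sum>j=0..r. W (j+1))"
  using assms(2)
proof (induction m rule: dec_induct)
  case base then show ?case by simp
next
  case (step m)
  define S where "S = (\<Sum>j=0..m. W (j+1))"
  have S: "(real m + 1) * W (m + 1) \<le> S" unfolding S_def by (rule avg_mono[where W=W, OF dec])
  have "W (Suc (m+1)) \<le> W (m+1)" by (rule dec) simp
  then have h: "(real m + 1) * W (m + 2) \<le> (real m + 1) * W (m+1)" by (intro mult_left_mono) auto
  have key: "(real m + 1) * W (m + 2) \<le> S" using h S by linarith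
  have "(\<Sum>j=0..Suc m. W (j+1)) = S + W (m + 2)" unfolding S_def by simp
  then have "(1 / (real (Suc m) + 1)) * (\<Sum>j=0..Suc m. W (j+1)) = (S + W (m+2)) / (real m + 2)" by simp
  also have "\<dots> \<le> S / (real m + 1)"
    using key by (simp add: field_simps)
  also have "\<dots> = (1 / (real m + 1)) * (\<Sum>j=0..m. W (j+1))" unfolding S_def by simp
  finally show ?case using step by linarith
qed

lemma R_bounds:
  fixes a W :: "nat \<Rightarrow> real"
  assumes a0: "\<And>r. r \<le> n \<Longrightarrow> 0 \<le> a r" and a1: "(\<Sum>r=0..n. a r) = 1"
    and dec: "\<And>k. 1 \<le> k \<Longrightarrow> W (Suc k) \<le> W k"
  defines "R \<equiv> (\<Sum>r=0..n. a r * (1 / (real r + 1) * (\<Sum>j=0..r. W (j+1))))"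
  shows "(\<Sum>r=0..n. a r * W (r+1)) \<le> R"
    and "(1 / (real n + 1)) * (\<Sum>j=0..n. W (j+1)) \<le> R"
    and "W (n+1) \<le> R"
proof -
  have av: "W (r+1) \<le> 1 / (real r + 1) * (\<Sum>j=0..r. W (j+1))" for r
    using avg_mono[where W=W and r=r, OF dec] by (simp add: field_simps)
  show 1: "(\<Sum>r=0..n. a r * W (r+1)) \<le> R"
    unfolding R_def by (intro sum_mono mult_left_mono av) (use a0 in auto)
  show "(1 / (real n + 1)) * (\<Sum>j=0..n. W (j+1)) \<le> R"
  proof -
    have "(1 / (real n + 1)) * (\<Sum>j=0..n. W (j+1)) = (\<Sum>r=0..n. a r * ((1 / (real n + 1)) * (\<Sum>j=0..n. W (j+1))))"
      by (subst sum_distrib_right[symmetric]) (simp add: a1)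
    also have "\<dots> \<le> R" unfolding R_def
      by (intro sum_mono mult_left_mono avg_dec[where W=W, OF dec]) (use a0 in auto)
    finally show ?thesis .
  qed
  have "W (n+1) = (\<Sum>r=0..n. a r * W (n+1))" by (simp add: sum_distrib_right[symmetric] a1)
  also have "\<dots> \<le> (\<Sum>r=0..n. a r * W (r+1))"
  proof (intro sum_mono mult_left_mono)
    fix r assume r: "r \<in> {0..n}"
    have "W (r + 1 + i) \<le> W (r+1)" for i
    proof (induction i)
      case 0 then show ?case by simp
    next
      case (Suc i)
      have "W (Suc (r + 1 + i)) \<le> W (r + 1 + i)" by (rule dec) simp
      then show ?case using Suc by simp
    qed
    from this[of "n - r"] r show "W (n+1) \<le> W (r+1)" by simp
    show "0 \<le> a r" using a0 r by simp
  qed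
  finally show "W (n+1) \<le> R" using 1 by linarith
qed

lemma sqsum:
  fixes F W :: "nat \<Rightarrow> real"
  assumes F0: "\<And>k. 1 \<le> k \<Longrightarrow> k \<le> m + 1 \<Longrightarrow> 0 \<le> F k"
    and FW: "\<And>k. 1 \<le> k \<Longrightarrow> k \<le> m + 1 \<Longrightarrow> F k \<le> pi / real k * W k"
    and W0: "\<And>k. 0 \<le> W k"
  shows "(\<Sum>k\<in>{1..m}. (real k + 1)^2 * (F k - F (Suc k))) \<le> 4 * pi * (\<Sum>j=0..m. W (j+1))"
proof -
  have "(\<Sum>k\<in>{1..m}. (real k + 1)^2 * (F k - F (Suc k)))
      = (\<Sum>k\<in>{1..m}. ((real k + 1)^2 - (real (k - 1) + 1)^2) * F k) + 1 * F 1 - (real m + 1)^2 * F (Suc m)"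
    using sum_by_parts1[of "\<lambda>k. (real k + 1)^2" F m] by simp
  also have "\<dots> \<le> (\<Sum>k\<in>{1..m}. 3 * pi * W k) + pi * W 1"
  proof -
    have "(\<Sum>k\<in>{1..m}. ((real k + 1)^2 - (real (k - 1) + 1)^2) * F k) \<le> (\<Sum>k\<in>{1..m}. 3 * pi * W k)"
    proof (rule sum_mono)
      fix k assume k: "k \<in> {1..m}"
      then have e: "(real (k - 1) + 1) = real k" by (simp add: of_nat_diff)
      have "(real k + 1)^2 - (real (k - 1) + 1)^2 = 2 * real k + 1" unfolding e by (simp add: power2_eq_square algebra_simps)
      also have "\<dots> \<le> 3 * real k" using k by simp
      finally have c: "(real k + 1)^2 - (real (k - 1) + 1)^2 \<le> 3 * real k" .
      have c0: "0 \<le> (real k + 1)^2 - (real (k - 1) + 1)^2" unfolding e by (simp add: power2_eq_square algebra_simps)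
      have "((real k + 1)^2 - (real (k - 1) + 1)^2) * F k \<le> (3 * real k) * F k"
        using F0[of k] k by (intro mult_right_mono c) auto
      also have "\<dots> \<le> (3 * real k) * (pi / real k * W k)"
        using FW[of k] k by (intro mult_left_mono) auto
      also have "\<dots> = 3 * pi * W k" using k by simp
      finally show "((real k + 1)^2 - (real (k - 1) + 1)^2) * F k \<le> 3 * pi * W k" .
    qed
    moreover have "1 * F 1 \<le> pi * W 1" using FW[of 1] by simp
    moreover have "0 \<le> (real m + 1)^2 * F (Suc m)" using F0[of "Suc m"] by simp
    ultimately show ?thesis by linarith
  qed
  also have "\<dots> \<le> 4 * pi * (\<Sum>j=0..m. W (j+1))"
  proof -
    have eqs: "(\<Sum>j=0..m. W (j+1)) = (\<Sum>k\<in>{1..Suc m}. W k)"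
      using sum.shift_bounds_cl_Suc_ivl[of W 0 m] by simp
    have "(\<Sum>k\<in>{1..m}. W k) \<le> (\<Sum>k\<in>{1..Suc m}. W k)"
      by (rule sum_mono2) (use W0 in auto)
    moreover have "W 1 \<le> (\<Sum>k\<in>{1..Suc m}. W k)"
      using member_le_sum[of 1 "{1..Suc m}" W] W0 by simp
    ultimately have h1: "(\<Sum>k\<in>{1..m}. W k) \<le> (\<Sum>k\<in>{1..Suc m}. W k)" "W 1 \<le> (\<Sum>k\<in>{1..Suc m}. W k)" .
    have "3 * pi * (\<Sum>k\<in>{1..m}. W k) \<le> 3 * pi * (\<Sum>k\<in>{1..Suc m}. W k)"
      using h1(1) by (intro mult_left_mono) auto
    moreover have "pi * W 1 \<le> pi * (\<Sum>k\<in>{1..Suc m}. W k)"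
      using h1(2) by (intro mult_left_mono) auto
    moreover have "(\<Sum>k\<in>{1..m}. 3 * pi * W k) = 3 * pi * (\<Sum>k\<in>{1..m}. W k)" by (simp add: sum_distrib_left)
    moreover have e4: "4 * pi * (\<Sum>k\<in>{1..Suc m}. W k) = 3 * pi * (\<Sum>k\<in>{1..Suc m}. W k) + pi * (\<Sum>k\<in>{1..Suc m}. W k)"
      by (simp add: algebra_simps)
    ultimately show ?thesis unfolding eqs by linarith
  qed
  finally show ?thesis .
qed

lemma E1:
  fixes a F W :: "nat \<Rightarrow> real"
  assumes a0: "\<And>r. r \<le> n \<Longrightarrow> 0 \<le> a r"
    and ii: "\<And>s. s \<le> n \<Longrightarrow> (1 / (real s + 1)) * (\<Sum>r=0..s. a r) \<le> K2 * a s"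
    and F0: "\<And>k. 1 \<le> k \<Longrightarrow> k \<le> n + 1 \<Longrightarrow> 0 \<le> F k"
    and FW: "\<And>k. 1 \<le> k \<Longrightarrow> k \<le> n + 1 \<Longrightarrow> F k \<le> pi / real k * W k"
    and W0: "\<And>k. 0 \<le> W k" and K2: "0 \<le> K2"
  shows "(\<Sum>k\<in>{1..n}. ((real k + 1) * (\<Sum>r\<in>{0..<k}. a r)) * (F k - F (Suc k)))
     \<le> pi * (K2 + 1) * (\<Sum>r=0..n. a r * W (r+1))"
proof -
  define A where "A k = (\<Sum>r\<in>{0..<k}. a r)" for k
  have "(\<Sum>k\<in>{1..n}. ((real k + 1) * A k) * (F k - F (Suc k)))
      = (\<Sum>k\<in>{1..n}. ((real k + 1) * A k - (real (k - 1) + 1) * A (k - 1)) * F k) + (real 0 + 1) * A 0 * F 1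
         - (real n + 1) * A n * F (Suc n)"
    using sum_by_parts1[of "\<lambda>k. (real k + 1) * A k" F n] by simp
  also have "\<dots> \<le> (\<Sum>k\<in>{1..n}. pi * (K2 + 1) * (a (k - 1) * W k))"
  proof -
    have A0: "A 0 = 0" unfolding A_def by simp
    have An: "0 \<le> (real n + 1) * A n * F (Suc n)"
      unfolding A_def using a0 F0[of "Suc n"] by (auto intro!: mult_nonneg_nonneg sum_nonneg)
    have "(\<Sum>k\<in>{1..n}. ((real k + 1) * A k - (real (k - 1) + 1) * A (k - 1)) * F k)
        \<le> (\<Sum>k\<in>{1..n}. pi * (K2 + 1) * (a (k - 1) * W k))"
    proof (rule sum_mono)
      fix k assume k: "k \<in> {1..n}"
      then obtain j where j: "k = Suc j" by (cases k) auto
      have Ak: "A k = A j + a j" unfolding A_def j by simp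
      have e: "(real k + 1) * A k - (real (k - 1) + 1) * A (k - 1) = A k + real k * a j"
        using Ak j by (simp add: algebra_simps)
      have aj: "0 \<le> a j" using a0 k j by simp
      have Akn: "0 \<le> A k" unfolding A_def using a0 k by (auto intro!: sum_nonneg)
      have iij: "A k / real k \<le> K2 * a j"
      proof -
        have "(\<Sum>r=0..j. a r) = A k" unfolding A_def j by (simp add: atLeastLessThanSuc_atLeastAtMost)
        then show ?thesis using ii[of j] k j by (simp add: add.commute)
      qed
      have "(A k + real k * a j) * F k \<le> (A k + real k * a j) * (pi / real k * W k)"
        using FW[of k] k Akn aj by (intro mult_left_mono) auto
      also have "\<dots> = pi * (A k / real k + a j) * W k" using k by (simp add: field_simps)
      also have "\<dots> \<le> pi * (K2 * a j + a j) * W k"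
        using iij W0[of k] by (intro mult_right_mono mult_left_mono) auto
      finally have fin: "(A k + real k * a j) * F k \<le> pi * (K2 * a j + a j) * W k" .
      have q1: "((real k + 1) * A k - (real (k - 1) + 1) * A (k - 1)) * F k = (A k + real k * a j) * F k"
        using e by simp
      have q2: "pi * (K2 * a j + a j) * W k = pi * (K2 + 1) * (a (k - 1) * W k)" using j by (simp add: algebra_simps)
      show "((real k + 1) * A k - (real (k - 1) + 1) * A (k - 1)) * F k \<le> pi * (K2 + 1) * (a (k - 1) * W k)"
        using fin unfolding q1 q2 .
    qed
    then show ?thesis using A0 An by simp
  qed
  also have "\<dots> = pi * (K2 + 1) * (\<Sum>k\<in>{1..n}. a (k - 1) * W k)" by (simp add: sum_distrib_left)
  also have "\<dots> \<le> pi * (K2 + 1) * (\<Sum>r=0..n. a r * W (r+1))"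
  proof -
    have "(\<Sum>k\<in>{1..n}. a (k - 1) * W k) \<le> (\<Sum>r=0..n. a r * W (r+1))"
    proof (cases n)
      case 0 then show ?thesis using a0 W0 by simp
    next
      case (Suc m)
      have "(\<Sum>k\<in>{1..n}. a (k - 1) * W k) = (\<Sum>r\<in>{0..m}. a r * W (r+1))"
        unfolding Suc using sum.shift_bounds_cl_Suc_ivl[of "\<lambda>k. a (k - 1) * W k" 0 m] by simp
      also have "\<dots> \<le> (\<Sum>r=0..n. a r * W (r+1))"
        by (rule sum_mono2) (use a0 W0 Suc in auto)
      finally show ?thesis .
    qed
    moreover have "0 \<le> pi * (K2 + 1)" using K2 by simp
    ultimately show ?thesis by (intro mult_left_mono) auto
  qed
  finally show ?thesis unfolding A_def .
qed

lemma E2: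
  fixes a F W :: "nat \<Rightarrow> real"
  assumes a0: "\<And>r. r \<le> n \<Longrightarrow> 0 \<le> a r"
    and F0: "\<And>k. 1 \<le> k \<Longrightarrow> k \<le> n + 1 \<Longrightarrow> 0 \<le> F k"
    and FW: "\<And>k. 1 \<le> k \<Longrightarrow> k \<le> n + 1 \<Longrightarrow> F k \<le> pi / real k * W k"
    and W0: "\<And>k. 0 \<le> W k"
  shows "(\<Sum>k\<in>{1..n}. (real k + 1)^2 * (\<Sum>r\<in>{k..<n}. a r / (real r + 1)) * (F k - F (Suc k)))
     \<le> 4 * pi * (\<Sum>r=0..n. a r * (1 / (real r + 1) * (\<Sum>j=0..r. W (j+1))))"
proof -
  define G where "G k = (real k + 1)^2 * (F k - F (Suc k))" for k
  have "(\<Sum>k\<in>{1..n}. (real k + 1)^2 * (\<Sum>r\<in>{k..<n}. a r / (real r + 1)) * (F k - F (Suc k)))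
      = (\<Sum>k\<in>{1..n}. \<Sum>r\<in>{r. r \<in> {0..<n} \<and> k \<le> r}. a r / (real r + 1) * G k)"
  proof (rule sum.cong[OF refl])
    fix k assume "k \<in> {1..n}"
    have se: "{r. r \<in> {0..<n} \<and> k \<le> r} = {k..<n}" by auto
    have "(real k + 1)^2 * (\<Sum>r\<in>{k..<n}. a r / (real r + 1)) * (F k - F (Suc k))
        = (\<Sum>r\<in>{k..<n}. a r / (real r + 1)) * G k"
      unfolding G_def by (simp only: mult_ac)
    also have "\<dots> = (\<Sum>r\<in>{k..<n}. a r / (real r + 1) * G k)" by (rule sum_distrib_right)
    finally show "(real k + 1)^2 * (\<Sum>r\<in>{k..<n}. a r / (real r + 1)) * (F k - F (Suc k))
      = (\<Sum>r\<in>{r. r \<in> {0..<n} \<and> k \<le> r}. a r / (real r + 1) * G k)"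
      unfolding se .
  qed
  also have "\<dots> = (\<Sum>r\<in>{0..<n}. \<Sum>k\<in>{k. k \<in> {1..n} \<and> k \<le> r}. a r / (real r + 1) * G k)"
    by (rule sum.swap_restrict) auto
  also have "\<dots> = (\<Sum>r\<in>{0..<n}. a r / (real r + 1) * (\<Sum>k\<in>{1..r}. G k))"
  proof (rule sum.cong[OF refl])
    fix r assume "r \<in> {0..<n}"
    then have "{k. k \<in> {1..n} \<and> k \<le> r} = {1..r}" by auto
    then show "(\<Sum>k\<in>{k. k \<in> {1..n} \<and> k \<le> r}. a r / (real r + 1) * G k) = a r / (real r + 1) * (\<Sum>k\<in>{1..r}. G k)"
      by (simp add: sum_distrib_left)
  qed
  also have "\<dots> \<le> (\<Sum>r\<in>{0..<n}. a r / (real r + 1) * (4 * pi * (\<Sum>j=0..r. W (j+1))))"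
  proof (rule sum_mono)
    fix r assume r: "r \<in> {0..<n}"
    have "(\<Sum>k\<in>{1..r}. G k) \<le> 4 * pi * (\<Sum>j=0..r. W (j+1))"
      unfolding G_def by (rule sqsum) (use F0 FW W0 r in auto)
    then show "a r / (real r + 1) * (\<Sum>k\<in>{1..r}. G k) \<le> a r / (real r + 1) * (4 * pi * (\<Sum>j=0..r. W (j+1)))"
      using a0[of r] r by (intro mult_left_mono) auto
  qed
  also have "\<dots> \<le> (\<Sum>r=0..n. a r / (real r + 1) * (4 * pi * (\<Sum>j=0..r. W (j+1))))"
  proof (rule sum_mono2)
    fix r assume "r \<in> {0..n} - {0..<n}"
    then have "r \<le> n" by auto
    have "0 \<le> (\<Sum>j=0..r. W (j+1))" using W0 by (intro sum_nonneg) auto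
    then show "0 \<le> a r / (real r + 1) * (4 * pi * (\<Sum>j=0..r. W (j+1)))"
      using a0[OF \<open>r \<le> n\<close>] by (intro mult_nonneg_nonneg divide_nonneg_nonneg) auto
  qed auto
  also have "\<dots> = 4 * pi * (\<Sum>r=0..n. a r * (1 / (real r + 1) * (\<Sum>j=0..r. W (j+1))))"
    by (simp add: sum_distrib_left algebra_simps)
  finally show ?thesis .
qed

lemma discrete_main:
  fixes a F W :: "nat \<Rightarrow> real"
  assumes a0: "\<And>r. r \<le> n \<Longrightarrow> 0 \<le> a r" and a1: "(\<Sum>r=0..n. a r) = 1"
    and ii: "\<And>s. s \<le> n \<Longrightarrow> (1 / (real s + 1)) * (\<Sum>r=0..s. a r) \<le> K2 * a s"
    and i: "a n \<le> K1 / (real n + 1)"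
    and F0: "\<And>k. 1 \<le> k \<Longrightarrow> k \<le> n + 1 \<Longrightarrow> 0 \<le> F k"
    and FW: "\<And>k. 1 \<le> k \<Longrightarrow> k \<le> n + 1 \<Longrightarrow> F k \<le> pi / real k * W k"
    and W0: "\<And>k. 0 \<le> W k" and dec: "\<And>k. 1 \<le> k \<Longrightarrow> W (Suc k) \<le> W k"
    and K: "0 \<le> K1" "0 \<le> K2" "0 \<le> K3"
  defines "R \<equiv> (\<Sum>r=0..n. a r * (1 / (real r + 1) * (\<Sum>j=0..r. W (j+1))))"
  shows "(\<Sum>k\<in>{1..n}. ((real k + 1) * (\<Sum>r\<in>{0..<k}. a r)
           + 2 * (real k + 1)^2 * (K3 * (\<Sum>r\<in>{k..<n}. a r / (real r + 1)) + a n)) * (F k - F (Suc k)))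
      \<le> pi * (K2 + 1 + 8 * K3 + 8 * K1) * R"
proof -
  have Rb: "(\<Sum>r=0..n. a r * W (r+1)) \<le> R" "(1 / (real n + 1)) * (\<Sum>j=0..n. W (j+1)) \<le> R"
    using R_bounds[where a=a and W=W, OF a0 a1 dec] unfolding R_def by auto
  define S1 where "S1 = (\<Sum>k\<in>{1..n}. ((real k + 1) * (\<Sum>r\<in>{0..<k}. a r)) * (F k - F (Suc k)))"
  define S2 where "S2 = (\<Sum>k\<in>{1..n}. (real k + 1)^2 * (\<Sum>r\<in>{k..<n}. a r / (real r + 1)) * (F k - F (Suc k)))"
  define S3 where "S3 = (\<Sum>k\<in>{1..n}. (real k + 1)^2 * (F k - F (Suc k)))"
  define A where "A k = (\<Sum>r\<in>{0..<k}. a r)" for k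
  define S where "S k = (\<Sum>r\<in>{k..<n}. a r / (real r + 1))" for k
  define g where "g k = F k - F (Suc k)" for k
  have pt: "((real k + 1) * A k + 2 * (real k + 1)^2 * (K3 * S k + a n)) * g k
      = ((real k + 1) * A k) * g k + 2 * K3 * ((real k + 1)^2 * S k * g k) + 2 * a n * ((real k + 1)^2 * g k)" for k
    by (simp add: algebra_simps)
  have eq: "(\<Sum>k\<in>{1..n}. ((real k + 1) * (\<Sum>r\<in>{0..<k}. a r)
           + 2 * (real k + 1)^2 * (K3 * (\<Sum>r\<in>{k..<n}. a r / (real r + 1)) + a n)) * (F k - F (Suc k)))
      = S1 + 2 * K3 * S2 + 2 * a n * S3"
  proof -
    have "(\<Sum>k\<in>{1..n}. ((real k + 1) * (\<Sum>r\<in>{0..<k}. a r)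
           + 2 * (real k + 1)^2 * (K3 * (\<Sum>r\<in>{k..<n}. a r / (real r + 1)) + a n)) * (F k - F (Suc k)))
      = (\<Sum>k\<in>{1..n}. ((real k + 1) * A k + 2 * (real k + 1)^2 * (K3 * S k + a n)) * g k)"
      unfolding A_def S_def g_def ..
    also have "\<dots> = (\<Sum>k\<in>{1..n}. ((real k + 1) * A k) * g k) + 2 * K3 * (\<Sum>k\<in>{1..n}. (real k + 1)^2 * S k * g k)
       + 2 * a n * (\<Sum>k\<in>{1..n}. (real k + 1)^2 * g k)"
      unfolding pt by (simp add: sum.distrib sum_distrib_left)
    finally show ?thesis unfolding S1_def S2_def S3_def A_def S_def g_def .
  qed
  have b1: "S1 \<le> pi * (K2 + 1) * R"
  proof -
    have "S1 \<le> pi * (K2 + 1) * (\<Sum>r=0..n. a r * W (r+1))"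
      using E1[where a=a and F=F and W=W, OF a0 ii F0 FW W0 K(2)] unfolding S1_def .
    also have "\<dots> \<le> pi * (K2 + 1) * R" using Rb(1) K(2) by (intro mult_left_mono) auto
    finally show ?thesis .
  qed
  have b2: "S2 \<le> 4 * pi * R"
    using E2[where a=a and F=F and W=W, OF a0 F0 FW W0] unfolding S2_def R_def by simp
  have b3: "S3 \<le> 4 * pi * (\<Sum>j=0..n. W (j+1))"
    unfolding S3_def by (rule sqsum) (use F0 FW W0 in auto)
  have "2 * a n * S3 \<le> 2 * a n * (4 * pi * (\<Sum>j=0..n. W (j+1)))"
    using b3 a0[of n] by (intro mult_left_mono) auto
  also have "\<dots> \<le> 2 * (K1 / (real n + 1)) * (4 * pi * (\<Sum>j=0..n. W (j+1)))"
  proof -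
    have "0 \<le> (\<Sum>j=0..n. W (j+1))" using W0 by (intro sum_nonneg) auto
    then show ?thesis using i by (intro mult_right_mono mult_left_mono) auto
  qed
  also have "\<dots> = 8 * pi * K1 * ((1 / (real n + 1)) * (\<Sum>j=0..n. W (j+1)))" by simp
  also have "\<dots> \<le> 8 * pi * K1 * R" using Rb(2) K(1) by (intro mult_left_mono) auto
  finally have b3': "2 * a n * S3 \<le> 8 * pi * K1 * R" .
  have b2': "2 * K3 * S2 \<le> 2 * K3 * (4 * pi * R)" using b2 K(3) by (intro mult_left_mono) auto
  have fin: "pi * (K2 + 1 + 8 * K3 + 8 * K1) * R = pi * (K2 + 1) * R + 2 * K3 * (4 * pi * R) + 8 * pi * K1 * R"
    by (simp add: algebra_simps)
  show ?thesis unfolding eq fin using b1 b2' b3' by linarith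
qed

lemma Dk_small:
  assumes "0 \<le> t"
  shows "\<bar>Dk k t\<bar> \<le> real k * (real k * t)"
proof -
  have "\<bar>Dk k t\<bar> \<le> (\<Sum>\<nu>\<in>{1..k}. \<bar>sin (real \<nu> * t)\<bar>)" unfolding Dk_def by (rule sum_abs)
  also have "\<dots> \<le> (\<Sum>\<nu>\<in>{1..k}. real k * t)"
  proof (rule sum_mono)
    fix \<nu> assume "\<nu> \<in> {1..k}"
    then have "real \<nu> * t \<le> real k * t" using assms by (intro mult_right_mono) auto
    moreover have "\<bar>sin (real \<nu> * t)\<bar> \<le> \<bar>real \<nu> * t\<bar>" by (rule abs_sin_x_le_abs_x)
    ultimately show "\<bar>sin (real \<nu> * t)\<bar> \<le> real k * t" using assms by simp
  qed
  also have "\<dots> = real k * (real k * t)" by simp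
  finally show ?thesis .
qed

lemma Kn_small:
  assumes A: "admissible_matrix a" and B: "admissible_matrix b" and t: "0 \<le> t" "t \<le> pi / (real n + 1)"
  shows "\<bar>Kn a b n t\<bar> \<le> real n * pi"
proof -
  have an: "0 \<le> a n r" if "r \<le> n" for r using A that unfolding admissible_matrix_def by auto
  have bn: "0 \<le> b r j" if "j \<le> r" for r j using B that unfolding admissible_matrix_def by auto
  have sb: "(\<Sum>j=0..r. b r j) = 1" for r using B unfolding admissible_matrix_def by auto
  have sa: "(\<Sum>r=0..n. a n r) = 1" using A unfolding admissible_matrix_def by auto
  have Dk: "\<bar>Dk k t\<bar> \<le> real n * pi" if "k \<le> n" for k
  proof -
    have "\<bar>Dk k t\<bar> \<le> real k * (real k * t)" by (rule Dk_small[OF t(1)])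
    also have "\<dots> \<le> real n * (real n * (pi / (real n + 1)))"
      using that t by (intro mult_mono) auto
    also have "\<dots> \<le> real n * pi"
    proof -
      have "real n * (pi / (real n + 1)) \<le> pi" using pi_gt_zero by (simp add: field_simps)
      then show ?thesis by (intro mult_left_mono) auto
    qed
    finally show ?thesis .
  qed
  have "\<bar>Kn a b n t\<bar> \<le> (\<Sum>r=0..n. \<Sum>k=0..r. a n r * b r k * (real n * pi))"
    unfolding Kn_def
  proof (rule order_trans[OF sum_abs], rule sum_mono, rule order_trans[OF sum_abs], rule sum_mono)
    fix r k assume r: "r \<in> {0..n}" and k: "k \<in> {0..r}"
    have ab: "0 \<le> a n r * b r k" using an[of r] bn[of k r] r k by auto
    have "\<bar>a n r * b r k * Dk k t\<bar> = (a n r * b r k) * \<bar>Dk k t\<bar>"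
      using abs_mult[of "a n r * b r k" "Dk k t"] abs_of_nonneg[OF ab] by simp
    also have "\<dots> \<le> a n r * b r k * (real n * pi)"
      using Dk[of k] r k ab by (intro mult_left_mono) auto
    finally show "\<bar>a n r * b r k * Dk k t\<bar> \<le> a n r * b r k * (real n * pi)" .
  qed
  also have "\<dots> = (\<Sum>r=0..n. a n r * (\<Sum>k=0..r. b r k)) * (real n * pi)"
    by (simp add: sum_distrib_left sum_distrib_right mult.assoc)
  also have "\<dots> = real n * pi" by (simp add: sb sa)
  finally show ?thesis .
qed

lemma cont_halfcot:
  assumes "0 < e"
  shows "continuous_on {e..pi} (\<lambda>t. (1/2) * cot (t/2))"
proof -
  have "sin (t/2) \<noteq> 0" if "t \<in> {e..pi}" for t
    using that assms by (intro order.strict_implies_not_eq[symmetric] sin_gt_zero) auto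
  then show ?thesis unfolding cot_def by (auto intro!: continuous_intros)
qed

lemma trunc_rep:
  assumes L: "L1 f" and e: "0 < e"
  shows "(\<lambda>t. psi f x t * ((1/2) * cot (t/2))) integrable_on {e..pi}"
    "conj_trunc f x e = - (1 / pi) * integral {e..pi} (\<lambda>t. psi f x t * ((1/2) * cot (t/2)))"
proof -
  have si: "set_integrable lborel {e..pi} (\<lambda>t. psi f x t * ((1/2) * cot (t/2)))"
    by (rule SI_mult_cont[OF SI_psi[OF L] cont_halfcot[OF e]])
  show "(\<lambda>t. psi f x t * ((1/2) * cot (t/2))) integrable_on {e..pi}" using SI_HK(1)[OF si] .
  have "(\<lambda>t. psi f x t * (1/2) * cot (t/2)) = (\<lambda>t. psi f x t * ((1/2) * cot (t/2)))"
    by (rule ext) (simp only: mult.assoc)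
  then show "conj_trunc f x e = - (1 / pi) * integral {e..pi} (\<lambda>t. psi f x t * ((1/2) * cot (t/2)))"
    unfolding conj_trunc_def using SI_HK(2)[OF si] by simp
qed

lemma decomp:
  fixes g :: "real \<Rightarrow> real"
  assumes "g integrable_on {pi / (real n + 1)..pi}"
  shows "integral {pi / (real n + 1)..pi} g = (\<Sum>k\<in>{1..n}. integral {pi / (real k + 1)..pi / real k} g)"
  using assms
proof (induction n)
  case 0 then show ?case by simp
next
  case (Suc n)
  have le1: "pi / (real (Suc n) + 1) \<le> pi / (real n + 1)"
    by (rule divide_left_mono) (use pi_gt_zero in auto)
  have le2: "pi / (real n + 1) \<le> pi" using pi_gt_zero by (simp add: field_simps)
  have int: "g integrable_on {pi / (real n + 1)..pi}"
    by (rule integrable_subinterval_real[OF Suc.prems]) (use le1 in auto)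
  have "integral {pi / (real (Suc n) + 1)..pi} g
      = integral {pi / (real (Suc n) + 1)..pi / (real n + 1)} g + integral {pi / (real n + 1)..pi} g"
    by (rule Henstock_Kurzweil_Integration.integral_combine[symmetric]) (use le1 le2 Suc.prems in auto)
  also have "integral {pi / (real n + 1)..pi} g = (\<Sum>k\<in>{1..n}. integral {pi / (real k + 1)..pi / real k} g)"
    by (rule Suc.IH[OF int])
  finally show ?case by (simp add: add.commute)
qed

lemma int_abs_bound:
  fixes f g :: "real \<Rightarrow> real"
  assumes "f integrable_on S" "g integrable_on S" "\<And>x. x \<in> S \<Longrightarrow> \<bar>f x\<bar> \<le> g x"
  shows "\<bar>integral S f\<bar> \<le> integral S g"
  using integral_norm_bound_integral[of f S g] assms by simp

lemma main_finite:
  fixes W :: "nat \<Rightarrow> real"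
  assumes L: "L1 f" and A: "admissible_matrix a" and B: "admissible_matrix b"
   and i: "\<forall>n. a n n \<le> K1 / (real n + 1)"
   and ii: "\<forall>n s. s \<le> n \<longrightarrow> (1 / (real s + 1)) * (\<Sum>r=0..s. a n r) \<le> K2 * a n s"
   and iii: "\<forall>n r l. l \<le> r \<and> r + 1 \<le> n \<longrightarrow>
            \<bar>a n r * b r (r - l) - a n (r + 1) * b (r + 1) (r + 1 - l)\<bar>
              \<le> K3 * a n r / (real r + 1)^2"
   and K: "K1 > 0" "K2 > 0" "K3 > 0"
   and WF: "\<And>k t. 1 \<le> k \<Longrightarrow> 0 < t \<Longrightarrow> t \<le> pi / real k \<Longrightarrow> integral {0..t} (\<lambda>u. \<bar>psi f x u\<bar>) / t \<le> W k"
   and W0: "\<And>k. 0 \<le> W k" and dec: "\<And>k. 1 \<le> k \<Longrightarrow> W (Suc k) \<le> W k"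
  shows "\<bar>T_AB a b f n x - conj_trunc f x (pi / (real n + 1))\<bar>
     \<le> (5 + K2 + 8 * K3 + 8 * K1) * (\<Sum>r=0..n. a n r * (1 / (real r + 1) * (\<Sum>j=0..r. W (j+1))))"
proof -
  define P where "P = psi f x"
  define d where "d = pi / (real n + 1)"
  define R where "R = (\<Sum>r=0..n. a n r * (1 / (real r + 1) * (\<Sum>j=0..r. W (j+1))))"
  define Fk where "Fk k = integral {0..pi / real k} (\<lambda>u. \<bar>P u\<bar>)" for k
  define C' where "C' = K2 + 1 + 8 * K3 + 8 * K1"
  have an: "0 \<le> a n r" if "r \<le> n" for r using A that unfolding admissible_matrix_def by auto
  have sa: "(\<Sum>r=0..n. a n r) = 1" using A unfolding admissible_matrix_def by auto
  have absint: "(\<lambda>u. \<bar>P u\<bar>) integrable_on {c..e}" for c e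
    unfolding P_def by (rule SI_HK(1)[OF SI_abs_psi[OF L]])
  have intK: "(\<lambda>t. P t * Kn a b n t) integrable_on {c..e}" for c e
    unfolding P_def by (rule integrable_psi_cont[OF L cont_Kn])
  have d0: "0 < d" unfolding d_def by simp
  have dpi: "d \<le> pi" unfolding d_def using pi_gt_zero by (simp add: field_simps)
  have R0: "0 \<le> R" unfolding R_def
  proof (intro sum_nonneg)
    fix r assume r: "r \<in> {0..n}"
    have "0 \<le> (\<Sum>j=0..r. W (j+1))" using W0 by (intro sum_nonneg) auto
    then show "0 \<le> a n r * (1 / (real r + 1) * (\<Sum>j=0..r. W (j+1)))"
      using an[of r] r by (intro mult_nonneg_nonneg) auto
  qed
  have Rb: "W (n+1) \<le> R" using R_bounds(3)[where a="a n" and W=W, OF an sa dec] unfolding R_def by simp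
  have F0: "0 \<le> Fk k" for k unfolding Fk_def by (rule integral_nonneg[OF absint]) auto
  have FW: "Fk k \<le> pi / real k * W k" if "1 \<le> k" for k
  proof -
    have pk: "0 < pi / real k" using that by simp
    have "Fk k / (pi / real k) \<le> W k" unfolding Fk_def P_def by (rule WF[OF that pk]) simp
    then show ?thesis using pk that by (simp add: field_simps)
  qed
  define I1 where "I1 = integral {0..d} (\<lambda>t. P t * Kn a b n t)"
  define I2 where "I2 = integral {d..pi} (\<lambda>t. P t * Kn a b n t)"
  define I3 where "I3 = integral {d..pi} (\<lambda>t. P t * ((1/2) * cot (t/2)))"
  define J where "J = integral {d..pi} (\<lambda>t. P t * (- Hn a b n t / (2 * sin (t/2))))"
  have T: "T_AB a b f n x = - (1 / pi) * (I1 + I2)"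
  proof -
    have "integral {0..pi} (\<lambda>t. P t * Kn a b n t) = I1 + I2"
      unfolding I1_def I2_def by (rule Henstock_Kurzweil_Integration.integral_combine[symmetric]) (use d0 dpi intK in auto)
    then show ?thesis using T_rep[OF L, of a b n x] unfolding P_def by simp
  qed
  have tr: "conj_trunc f x (pi / (real n + 1)) = - (1 / pi) * I3"
    using trunc_rep(2)[OF L d0, of x] unfolding I3_def P_def d_def by simp
  have int3: "(\<lambda>t. P t * ((1/2) * cot (t/2))) integrable_on {d..pi}"
    using trunc_rep(1)[OF L d0, of x] unfolding P_def .
  have sinpos: "0 < sin (t/2)" if "t \<in> {d..pi}" for t
    using that d0 by (intro sin_gt_zero) auto
  have J: "I2 - I3 = J"
  proof -
    have "I2 - I3 = integral {d..pi} (\<lambda>t. P t * Kn a b n t - P t * ((1/2) * cot (t/2)))"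
      unfolding I2_def I3_def by (rule integral_diff[symmetric]) (use intK int3 in auto)
    also have "\<dots> = J" unfolding J_def
    proof (rule integral_cong)
      fix t assume "t \<in> {d..pi}"
      then have "sin (t/2) \<noteq> 0" using sinpos by force
      then have eq: "Kn a b n t - (1/2) * cot (t/2) = - Hn a b n t / (2 * sin (t/2))"
        by (rule Kn_formula[OF _ A B])
      have "P t * Kn a b n t - P t * ((1/2) * cot (t/2)) = P t * (Kn a b n t - (1/2) * cot (t/2))"
        by (rule right_diff_distrib[symmetric])
      then show "P t * Kn a b n t - P t * ((1/2) * cot (t/2)) = P t * (- Hn a b n t / (2 * sin (t/2)))"
        unfolding eq .
    qed
    finally show ?thesis .
  qed
  have diff: "T_AB a b f n x - conj_trunc f x (pi / (real n + 1)) = - (1 / pi) * (I1 + J)"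
    unfolding T tr J[symmetric] by (simp add: algebra_simps)
  have bI1: "\<bar>I1\<bar> \<le> pi * pi * R"
  proof -
    have "\<bar>I1\<bar> \<le> integral {0..d} (\<lambda>t. \<bar>P t\<bar> * (real n * pi))"
      unfolding I1_def
    proof (rule int_abs_bound)
      show "(\<lambda>t. P t * Kn a b n t) integrable_on {0..d}" by (rule intK)
      show "(\<lambda>t. \<bar>P t\<bar> * (real n * pi)) integrable_on {0..d}" using absint by (rule integrable_on_mult_left)
      fix t assume "t \<in> {0..d}"
      then have "\<bar>Kn a b n t\<bar> \<le> real n * pi" using Kn_small[OF A B, of t n] unfolding d_def by auto
      then show "\<bar>P t * Kn a b n t\<bar> \<le> \<bar>P t\<bar> * (real n * pi)" by (simp add: abs_mult mult_left_mono)
    qed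
    also have "\<dots> = Fk (n+1) * (real n * pi)" unfolding Fk_def d_def by (simp add: add.commute)
    also have "\<dots> \<le> (d * W (n+1)) * (real n * pi)"
    proof (rule mult_right_mono)
      have "Fk (n+1) / d \<le> W (n+1)" unfolding Fk_def P_def d_def of_nat_add of_nat_1 by (rule WF) (auto simp: add.commute)
      then show "Fk (n+1) \<le> d * W (n+1)" using d0 by (simp add: field_simps)
    qed simp
    also have "\<dots> = (real n * d) * pi * W (n+1)" by (simp add: algebra_simps)
    also have "\<dots> \<le> pi * pi * W (n+1)"
    proof -
      have "real n * d \<le> pi" unfolding d_def using pi_gt_zero by (simp add: field_simps)
      then show ?thesis using W0[of "n+1"] by (intro mult_right_mono) auto
    qed
    also have "\<dots> \<le> pi * pi * R" using Rb by (intro mult_left_mono) auto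
    finally show ?thesis .
  qed
  define g where "g t = \<bar>P t\<bar> * (\<bar>Hn a b n t\<bar> / (2 * sin (t/2)))" for t
  have gint: "g integrable_on {c..pi}" if "0 < c" for c
  proof -
    have "sin (t/2) \<noteq> 0" if "t \<in> {c..pi}" for t
      using that \<open>0 < c\<close> by (intro order.strict_implies_not_eq[symmetric] sin_gt_zero) auto
    then have "continuous_on {c..pi} (\<lambda>t. \<bar>Hn a b n t\<bar> / (2 * sin (t/2)))"
      by (auto intro!: continuous_intros cont_Hn[THEN continuous_on_subset])
    then show ?thesis unfolding g_def P_def by (rule SI_HK(1)[OF SI_mult_cont[OF SI_abs_psi[OF L]]])
  qed
  have bJ: "\<bar>J\<bar> \<le> pi * C' * R"
  proof -
    have "\<bar>J\<bar> \<le> integral {d..pi} g" unfolding J_def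
    proof (rule int_abs_bound)
      show "(\<lambda>t. P t * (- Hn a b n t / (2 * sin (t/2)))) integrable_on {d..pi}"
      proof -
        have "sin (t/2) \<noteq> 0" if "t \<in> {d..pi}" for t using sinpos[OF that] by simp
        then have "continuous_on {d..pi} (\<lambda>t. - Hn a b n t / (2 * sin (t/2)))"
          by (auto intro!: continuous_intros cont_Hn[THEN continuous_on_subset])
        then show ?thesis unfolding P_def by (rule integrable_psi_cont[OF L])
      qed
      show "g integrable_on {d..pi}" by (rule gint[OF d0])
      fix t assume "t \<in> {d..pi}"
      then have "0 < sin (t/2)" by (rule sinpos)
      then show "\<bar>P t * (- Hn a b n t / (2 * sin (t/2)))\<bar> \<le> g t" unfolding g_def by (simp add: abs_mult)
    qed
    also have "\<dots> = (\<Sum>k\<in>{1..n}. integral {pi / (real k + 1)..pi / real k} g)"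
      unfolding d_def by (rule decomp) (rule gint[OF d0[unfolded d_def]])
    also have "\<dots> \<le> (\<Sum>k\<in>{1..n}. ((real k + 1) * (\<Sum>r\<in>{0..<k}. a n r)
           + 2 * (real k + 1)^2 * (K3 * (\<Sum>r\<in>{k..<n}. a n r / (real r + 1)) + a n n)) * (Fk k - Fk (Suc k)))"
    proof (rule sum_mono)
      fix k assume k: "k \<in> {1..n}"
      define M where "M = (real k + 1) * (\<Sum>r\<in>{0..<k}. a n r)
           + 2 * (real k + 1)^2 * (K3 * (\<Sum>r\<in>{k..<n}. a n r / (real r + 1)) + a n n)"
      have kpos: "0 < real k" using k by simp
      have lo: "0 < pi / (real k + 1)" by simp
      have le: "pi / (real k + 1) \<le> pi / real k" by (rule divide_left_mono) (use kpos in auto)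
      have "integral {pi / (real k + 1)..pi / real k} g \<le> integral {pi / (real k + 1)..pi / real k} (\<lambda>t. \<bar>P t\<bar> * M)"
      proof (rule integral_le)
        show "g integrable_on {pi / (real k + 1)..pi / real k}"
          by (rule integrable_subinterval_real[OF gint[OF lo]]) (use le kpos in \<open>auto simp: field_simps\<close>)
        show "(\<lambda>t. \<bar>P t\<bar> * M) integrable_on {pi / (real k + 1)..pi / real k}"
          using absint by (rule integrable_on_mult_left)
        fix t assume t: "t \<in> {pi / (real k + 1)..pi / real k}"
        have "\<bar>Hn a b n t\<bar> / (2 * sin (t/2)) \<le> M" unfolding M_def
          by (rule H_bound[OF A B iii K(3)]) (use k t in auto)
        then show "g t \<le> \<bar>P t\<bar> * M" unfolding g_def by (intro mult_left_mono) auto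
      qed
      also have "\<dots> = M * (Fk k - Fk (Suc k))"
      proof -
        have "integral {0..pi / (real k + 1)} (\<lambda>t. \<bar>P t\<bar>) + integral {pi / (real k + 1)..pi / real k} (\<lambda>t. \<bar>P t\<bar>)
            = integral {0..pi / real k} (\<lambda>t. \<bar>P t\<bar>)"
          by (rule Henstock_Kurzweil_Integration.integral_combine) (use le absint in auto)
        moreover have "Fk (Suc k) = integral {0..pi / (real k + 1)} (\<lambda>t. \<bar>P t\<bar>)"
          unfolding Fk_def by (simp add: add.commute)
        ultimately have I: "integral {pi / (real k + 1)..pi / real k} (\<lambda>t. \<bar>P t\<bar>) = Fk k - Fk (Suc k)"
          unfolding Fk_def by linarith
        show ?thesis by (simp add: I mult.commute)
      qed
      finally show "integral {pi / (real k + 1)..pi / real k} g \<le> ((real k + 1) * (\<Sum>r\<in>{0..<k}. a n r)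
           + 2 * (real k + 1)^2 * (K3 * (\<Sum>r\<in>{k..<n}. a n r / (real r + 1)) + a n n)) * (Fk k - Fk (Suc k))"
        unfolding M_def .
    qed
    also have "\<dots> \<le> pi * C' * R" unfolding C'_def R_def
    proof (rule discrete_main[where a="a n" and F=Fk and W=W])
      show "\<And>r. r \<le> n \<Longrightarrow> 0 \<le> a n r" by (rule an)
      show "(\<Sum>r=0..n. a n r) = 1" by (rule sa)
      show "\<And>s. s \<le> n \<Longrightarrow> (1 / (real s + 1)) * (\<Sum>r=0..s. a n r) \<le> K2 * a n s" using ii by auto
      show "a n n \<le> K1 / (real n + 1)" using i by auto
      show "\<And>k. 1 \<le> k \<Longrightarrow> k \<le> n + 1 \<Longrightarrow> 0 \<le> Fk k" using F0 by auto
      show "\<And>k. 1 \<le> k \<Longrightarrow> k \<le> n + 1 \<Longrightarrow> Fk k \<le> pi / real k * W k" using FW by auto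
    qed (use W0 dec K in auto)
    finally show ?thesis .
  qed
  have "\<bar>T_AB a b f n x - conj_trunc f x (pi / (real n + 1))\<bar> = (1 / pi) * \<bar>I1 + J\<bar>"
    unfolding diff by (simp add: abs_mult)
  also have "\<dots> \<le> (1 / pi) * (pi * pi * R + pi * C' * R)"
    using bI1 bJ abs_triangle_ineq[of I1 J] by (intro mult_left_mono) auto
  also have "\<dots> = (pi + C') * R" by (simp add: field_simps)
  also have "\<dots> \<le> (5 + K2 + 8 * K3 + 8 * K1) * R"
    using R0 pi_less_4 unfolding C'_def by (intro mult_right_mono) auto
  finally show ?thesis unfolding R_def .
qed

lemma trunc_local:
  assumes L: "L1 f" and e: "0 < e" "e \<le> d" and d: "d \<le> pi"
  shows "\<bar>conj_trunc f x e - conj_trunc f x d\<bar> \<le> (1/pi) * integral {e..d} (\<lambda>t. \<bar>psi f x t\<bar> * (1 / t))"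
proof -
  have d0: "0 < d" using e by simp
  define h where "h t = psi f x t * ((1/2) * cot (t/2))" for t
  have int: "h integrable_on {e..pi}" unfolding h_def by (rule trunc_rep(1)[OF L e(1)])
  have "integral {e..pi} h = integral {e..d} h + integral {d..pi} h"
    by (rule Henstock_Kurzweil_Integration.integral_combine[symmetric]) (use e d int in auto)
  then have eq: "conj_trunc f x e - conj_trunc f x d = - (1/pi) * integral {e..d} h"
    using trunc_rep(2)[OF L e(1), of x] trunc_rep(2)[OF L d0, of x] unfolding h_def by (simp add: algebra_simps)
  have "\<bar>integral {e..d} h\<bar> \<le> integral {e..d} (\<lambda>t. \<bar>psi f x t\<bar> * (1 / t))"
  proof (rule int_abs_bound)
    show "h integrable_on {e..d}" by (rule integrable_subinterval_real[OF int]) (use d in auto)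
    have "continuous_on {e..d} (\<lambda>t. 1 / t)" using e by (auto intro!: continuous_intros)
    then show "(\<lambda>t. \<bar>psi f x t\<bar> * (1 / t)) integrable_on {e..d}"
      by (rule SI_HK(1)[OF SI_mult_cont[OF SI_abs_psi[OF L]]])
    fix t assume t: "t \<in> {e..d}"
    then have "0 < t" "t \<le> pi" using e d by auto
    from half_cot_le[OF this] have c: "\<bar>(1/2) * cot (t/2)\<bar> \<le> 1 / t" by simp
    have "\<bar>h t\<bar> = \<bar>psi f x t\<bar> * \<bar>(1/2) * cot (t/2)\<bar>" unfolding h_def by (rule abs_mult)
    also have "\<dots> \<le> \<bar>psi f x t\<bar> * (1 / t)" by (rule mult_left_mono[OF c]) simp
    finally show "\<bar>h t\<bar> \<le> \<bar>psi f x t\<bar> * (1 / t)" .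
  qed
  then have "(1/pi) * \<bar>integral {e..d} h\<bar> \<le> (1/pi) * integral {e..d} (\<lambda>t. \<bar>psi f x t\<bar> * (1 / t))"
    by (intro mult_left_mono) auto
  moreover have "\<bar>conj_trunc f x e - conj_trunc f x d\<bar> = (1/pi) * \<bar>integral {e..d} h\<bar>"
    unfolding eq by (simp add: abs_mult)
  ultimately show ?thesis by simp
qed

lemma nn_eq:
  assumes L: "L1 f" and e: "0 < e"
  shows "(\<integral>\<^sup>+ t. ennreal (\<bar>psi f x t\<bar> / t) * indicator {e..d} t \<partial>lborel)
      = ennreal (integral {e..d} (\<lambda>t. \<bar>psi f x t\<bar> * (1 / t)))"
proof -
  have "continuous_on {e..d} (\<lambda>t. 1 / t)" using e by (auto intro!: continuous_intros)
  then have si: "set_integrable lborel {e..d} (\<lambda>t. \<bar>psi f x t\<bar> * (1 / t))"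
    by (rule SI_mult_cont[OF SI_abs_psi[OF L]])
  have "(\<integral>\<^sup>+ t. ennreal (indicator {e..d} t *\<^sub>R (\<bar>psi f x t\<bar> * (1 / t))) \<partial>lborel)
      = ennreal (integral\<^sup>L lborel (\<lambda>t. indicator {e..d} t *\<^sub>R (\<bar>psi f x t\<bar> * (1 / t))))"
  proof (rule nn_integral_eq_integral)
    show "integrable lborel (\<lambda>t. indicator {e..d} t *\<^sub>R (\<bar>psi f x t\<bar> * (1 / t)))"
      using si unfolding set_integrable_def .
    show "AE t in lborel. 0 \<le> indicator {e..d} t *\<^sub>R (\<bar>psi f x t\<bar> * (1 / t))"
      using e by (intro AE_I2) (auto simp: indicator_def)
  qed
  moreover have "(\<lambda>t. ennreal (indicator {e..d} t *\<^sub>R (\<bar>psi f x t\<bar> * (1 / t))))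
      = (\<lambda>t. ennreal (\<bar>psi f x t\<bar> / t) * indicator {e..d} t)"
    by (auto simp: indicator_def fun_eq_iff)
  moreover have "integral\<^sup>L lborel (\<lambda>t. indicator {e..d} t *\<^sub>R (\<bar>psi f x t\<bar> * (1 / t)))
      = integral {e..d} (\<lambda>t. \<bar>psi f x t\<bar> * (1 / t))"
    using SI_HK(2)[OF si] unfolding set_lebesgue_integral_def by simp
  ultimately show ?thesis by simp
qed

lemma trunc_limit:
  assumes L: "L1 f" and lim: "((\<lambda>\<epsilon>. conj_trunc f x \<epsilon>) \<longlongrightarrow> Lv) (at_right 0)"
    and d: "0 < d" "d \<le> pi" and B: "0 \<le> B"
    and hyp: "ennreal (1 / pi) * (\<integral>\<^sup>+ t\<in>{0<..d}. ennreal (\<bar>psi f x t\<bar> / t) \<partial>lborel) \<le> ennreal B"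
  shows "\<bar>conj_trunc f x d - Lv\<bar> \<le> B"
proof -
  have loc: "\<bar>conj_trunc f x e - conj_trunc f x d\<bar> \<le> B" if e: "0 < e" "e \<le> d" for e
  proof -
    define J where "J = integral {e..d} (\<lambda>t. \<bar>psi f x t\<bar> * (1 / t))"
    have J0: "0 \<le> J" unfolding J_def
    proof (rule integral_nonneg)
      have "continuous_on {e..d} (\<lambda>t. 1 / t)" using e by (auto intro!: continuous_intros)
      then show "(\<lambda>t. \<bar>psi f x t\<bar> * (1 / t)) integrable_on {e..d}"
        by (rule SI_HK(1)[OF SI_mult_cont[OF SI_abs_psi[OF L]]])
    qed (use e in auto)
    have "ennreal J = (\<integral>\<^sup>+ t. ennreal (\<bar>psi f x t\<bar> / t) * indicator {e..d} t \<partial>lborel)"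
      unfolding J_def by (rule nn_eq[OF L e(1), symmetric])
    also have "\<dots> \<le> (\<integral>\<^sup>+ t\<in>{0<..d}. ennreal (\<bar>psi f x t\<bar> / t) \<partial>lborel)"
      by (intro nn_integral_mono) (use e in \<open>auto simp: indicator_def\<close>)
    finally have "ennreal (1/pi) * ennreal J \<le> ennreal B"
      using hyp by (meson dual_order.trans mult_left_mono zero_le)
    then have "ennreal (J / pi) \<le> ennreal B" using J0 by (simp add: ennreal_mult'[symmetric])
    then have "J / pi \<le> B" using B by (simp add: ennreal_le_iff)
    then show ?thesis using trunc_local[OF L e d(2), of x] unfolding J_def by simp
  qed
  have "((\<lambda>\<epsilon>. \<bar>conj_trunc f x \<epsilon> - conj_trunc f x d\<bar>) \<longlongrightarrow> \<bar>Lv - conj_trunc f x d\<bar>) (at_right 0)"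
    by (intro tendsto_intros lim)
  moreover have "eventually (\<lambda>\<epsilon>. \<bar>conj_trunc f x \<epsilon> - conj_trunc f x d\<bar> \<le> B) (at_right 0)"
  proof -
    have "eventually (\<lambda>\<epsilon>. \<epsilon> \<in> {0<..<d}) (at_right 0)" by (rule eventually_at_right_real[OF d(1)])
    then show ?thesis by eventually_elim (use loc in auto)
  qed
  ultimately have "\<bar>Lv - conj_trunc f x d\<bar> \<le> B"
    by (intro tendsto_upperbound) auto
  then show ?thesis by simp
qed

section \<open>The supremum modulus\<close>

lemma F_eq:
  assumes "L1 f"
  shows "(LINT u:{0..t}|lborel. \<bar>psi f x u\<bar>) = integral {0..t} (\<lambda>u. \<bar>psi f x u\<bar>)"
  by (rule SI_HK(2)[OF SI_abs_psi[OF assms]])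

lemma wbar_upper:
  assumes "L1 f" "0 < t" "t \<le> d"
  shows "ereal (integral {0..t} (\<lambda>u. \<bar>psi f x u\<bar>) / t) \<le> wbar_mod f x d"
proof -
  have "ereal ((1 / t) * (LINT u:{0..t}|lborel. \<bar>psi f x u\<bar>)) \<le> wbar_mod f x d"
    unfolding wbar_mod_def by (rule SUP_upper) (use assms in auto)
  then show ?thesis using F_eq[OF assms(1), where x=x and t=t] by simp
qed

lemma wbar_mono:
  assumes "d1 \<le> d2"
  shows "wbar_mod f x d1 \<le> wbar_mod f x d2"
  unfolding wbar_mod_def by (rule SUP_subset_mono) (use assms in auto)

lemma wbar_nonneg:
  assumes "L1 f" "0 < d"
  shows "0 \<le> wbar_mod f x d"
proof -
  have "0 \<le> integral {0..d} (\<lambda>u. \<bar>psi f x u\<bar>)"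
    by (rule integral_nonneg[OF SI_HK(1)[OF SI_abs_psi[OF assms(1)]]]) auto
  then have "0 \<le> ereal (integral {0..d} (\<lambda>u. \<bar>psi f x u\<bar>) / d)" using assms by simp
  also have "\<dots> \<le> wbar_mod f x d" by (rule wbar_upper) (use assms in auto)
  finally show ?thesis .
qed

lemma rhs_inf:
  assumes L: "L1 f" and A: "admissible_matrix a" and inf: "wbar_mod f x pi = \<infinity>"
  shows "rhs_sum a f n x = \<infinity>"
proof -
  have an: "0 \<le> a n r" if "r \<le> n" for r using A that unfolding admissible_matrix_def by auto
  have sa: "(\<Sum>r=0..n. a n r) = 1" using A unfolding admissible_matrix_def by auto
  have "\<exists>r\<in>{0..n}. 0 < a n r"
  proof (rule ccontr)
    assume "\<not> (\<exists>r\<in>{0..n}. 0 < a n r)"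
    then have "\<forall>r\<in>{0..n}. a n r = 0" using an by (auto simp: not_less intro: antisym)
    then have "(\<Sum>r=0..n. a n r) = 0" by simp
    then show False using sa by simp
  qed
  then obtain r0 where r0: "r0 \<in> {0..n}" "a n r0 > 0" by blast
  have S: "(\<Sum>k=0..r. wbar_mod f x (pi / (real k + 1))) = \<infinity>" for r
    unfolding sum_Pinfty by (rule conjI, simp, rule bexI[of _ 0]) (use inf in auto)
  have "ereal (a n r0) * (ereal (1 / (real r0 + 1)) * (\<Sum>k=0..r0. wbar_mod f x (pi / (real k + 1)))) = \<infinity>"
    unfolding S using r0 by simp
  then show ?thesis unfolding rhs_sum_def sum_Pinfty using r0(1) by blast
qed

lemma Wfacts:
  assumes L: "L1 f" and fin: "wbar_mod f x pi \<noteq> \<infinity>"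
  defines "W \<equiv> \<lambda>k. real_of_ereal (wbar_mod f x (pi / real k))"
  shows "\<And>k. 1 \<le> k \<Longrightarrow> wbar_mod f x (pi / real k) = ereal (W k)"
    and "\<And>k. 0 \<le> W k"
    and "\<And>k. 1 \<le> k \<Longrightarrow> W (Suc k) \<le> W k"
    and "\<And>k t. 1 \<le> k \<Longrightarrow> 0 < t \<Longrightarrow> t \<le> pi / real k \<Longrightarrow> integral {0..t} (\<lambda>u. \<bar>psi f x u\<bar>) / t \<le> W k"
    and "rhs_sum a f n x = ereal (\<Sum>r=0..n. a n r * (1 / (real r + 1) * (\<Sum>j=0..r. W (j+1))))"
    and "w_mod f x (pi / (real n + 1)) \<le> W (n+1)"
proof -
  have fin': "wbar_mod f x (pi / real k) \<noteq> \<infinity>" if "1 \<le> k" for k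
  proof -
    have "pi / real k \<le> pi" using that pi_gt_zero by (simp add: field_simps)
    then have "wbar_mod f x (pi / real k) \<le> wbar_mod f x pi" by (rule wbar_mono)
    then show ?thesis using fin by auto
  qed
  have nn: "0 \<le> wbar_mod f x (pi / real k)" if "1 \<le> k" for k
    by (rule wbar_nonneg[OF L]) (use that in simp)
  show eqW: "wbar_mod f x (pi / real k) = ereal (W k)" if "1 \<le> k" for k
    unfolding W_def using fin'[OF that] nn[OF that] by (cases "wbar_mod f x (pi / real k)") auto
  show W0: "0 \<le> W k" for k
  proof (cases "k = 0")
    case True
    have "wbar_mod f x 0 = -\<infinity>" unfolding wbar_mod_def by (simp add: bot_ereal_def)
    then show ?thesis unfolding W_def using True by simp
  next
    case False
    then show ?thesis unfolding W_def using nn[of k] by (simp add: real_of_ereal_pos)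
  qed
  show "W (Suc k) \<le> W k" if "1 \<le> k" for k
  proof -
    have "pi / real (Suc k) \<le> pi / real k" by (rule divide_left_mono) (use that in auto)
    then have "wbar_mod f x (pi / real (Suc k)) \<le> wbar_mod f x (pi / real k)" by (rule wbar_mono)
    then show ?thesis using eqW[of k] eqW[of "Suc k"] that by simp
  qed
  show "integral {0..t} (\<lambda>u. \<bar>psi f x u\<bar>) / t \<le> W k" if "1 \<le> k" "0 < t" "t \<le> pi / real k" for k t
    using wbar_upper[OF L that(2,3), of x] eqW[OF that(1)] by simp
  have e1: "wbar_mod f x (pi / (real j + 1)) = ereal (W (j+1))" for j
    using eqW[of "j+1"] by (simp add: add.commute)
  show "rhs_sum a f n x = ereal (\<Sum>r=0..n. a n r * (1 / (real r + 1) * (\<Sum>j=0..r. W (j+1))))"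
    unfolding rhs_sum_def e1 by simp
  show "w_mod f x (pi / (real n + 1)) \<le> W (n+1)"
  proof -
    have "ereal (integral {0..pi / (real n + 1)} (\<lambda>u. \<bar>psi f x u\<bar>) / (pi / (real n + 1))) \<le> wbar_mod f x (pi / (real n + 1))"
      by (rule wbar_upper[OF L]) auto
    then show ?thesis unfolding w_mod_def F_eq[OF L] e1 by (simp add: field_simps)
  qed
qed

theorem theorem1:
  fixes K1 K2 K3 :: real
  assumes "K1 > 0" "K2 > 0" "K3 > 0"
  shows
   "(\<exists>C>0. \<forall>(f::real \<Rightarrow> real) a b.
        L1 f \<and> admissible_matrix a \<and> admissible_matrix b \<and>
        (\<forall>n. a n n \<le> K1 / (real n + 1)) \<and>
        (\<forall>n s. s \<le> n \<longrightarrow> (1 / (real s + 1)) * (\<Sum>r=0..s. a n r) \<le> K2 * a n s) \<and>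
        (\<forall>n r l. l \<le> r \<and> r + 1 \<le> n \<longrightarrow>
            \<bar>a n r * b r (r - l) - a n (r + 1) * b (r + 1) (r + 1 - l)\<bar>
              \<le> K3 * a n r / (real r + 1)^2)
      \<longrightarrow> (\<forall>n x. ereal \<bar>T_AB a b f n x - conj_trunc f x (pi / (real n + 1))\<bar>
                    \<le> ereal C * rhs_sum a f n x))
    \<and>
    (\<forall>K4>0. \<exists>C>0. \<forall>(f::real \<Rightarrow> real) a b x L.
        L1 f \<and> admissible_matrix a \<and> admissible_matrix b \<and>
        (\<forall>n. a n n \<le> K1 / (real n + 1)) \<and>
        (\<forall>n s. s \<le> n \<longrightarrow> (1 / (real s + 1)) * (\<Sum>r=0..s. a n r) \<le> K2 * a n s) \<and>
        (\<forall>n r l. l \<le> r \<and> r + 1 \<le> n \<longrightarrow>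
            \<bar>a n r * b r (r - l) - a n (r + 1) * b (r + 1) (r + 1 - l)\<bar>
              \<le> K3 * a n r / (real r + 1)^2) \<and>
        ((\<lambda>\<epsilon>. conj_trunc f x \<epsilon>) \<longlongrightarrow> L) (at_right 0) \<and>
        (\<forall>n::nat. ennreal (1 / pi) *
            (\<integral>\<^sup>+ t\<in>{0<..pi / (real n + 1)}. ennreal (\<bar>psi f x t\<bar> / t) \<partial>lborel)
            \<le> ennreal (K4 * w_mod f x (pi / (real n + 1))))
      \<longrightarrow> (\<forall>n. ereal \<bar>T_AB a b f n x - L\<bar> \<le> ereal C * rhs_sum a f n x))"
proof -
  define C where "C = 5 + K2 + 8 * K3 + 8 * K1"
  have C0: "C > 0" unfolding C_def using assms by simp
  have core: "\<bar>T_AB a b f n x - conj_trunc f x (pi / (real n + 1))\<bar>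
       \<le> C * (\<Sum>r=0..n. a n r * (1 / (real r + 1) * (\<Sum>j=0..r. real_of_ereal (wbar_mod f x (pi / real (j+1))))))"
    if H: "L1 f" "admissible_matrix a" "admissible_matrix b"
        "\<forall>n. a n n \<le> K1 / (real n + 1)"
        "\<forall>n s. s \<le> n \<longrightarrow> (1 / (real s + 1)) * (\<Sum>r=0..s. a n r) \<le> K2 * a n s"
        "\<forall>n r l. l \<le> r \<and> r + 1 \<le> n \<longrightarrow>
            \<bar>a n r * b r (r - l) - a n (r + 1) * b (r + 1) (r + 1 - l)\<bar>
              \<le> K3 * a n r / (real r + 1)^2"
      and fin: "wbar_mod f x pi \<noteq> \<infinity>"
    for f a b n x
  proof -
    note WF = Wfacts[OF H(1) fin]
    show ?thesis unfolding C_def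
      by (rule main_finite[OF H assms(1,2,3)]) (use WF in auto)
  qed
  have ereal_core: "ereal \<bar>T_AB a b f n x - conj_trunc f x (pi / (real n + 1))\<bar> \<le> ereal C * rhs_sum a f n x"
    if H: "L1 f" "admissible_matrix a" "admissible_matrix b"
        "\<forall>n. a n n \<le> K1 / (real n + 1)"
        "\<forall>n s. s \<le> n \<longrightarrow> (1 / (real s + 1)) * (\<Sum>r=0..s. a n r) \<le> K2 * a n s"
        "\<forall>n r l. l \<le> r \<and> r + 1 \<le> n \<longrightarrow>
            \<bar>a n r * b r (r - l) - a n (r + 1) * b (r + 1) (r + 1 - l)\<bar>
              \<le> K3 * a n r / (real r + 1)^2"
    for f a b n x
  proof (cases "wbar_mod f x pi = \<infinity>")
    case True
    then have "rhs_sum a f n x = \<infinity>" by (rule rhs_inf[OF H(1,2)])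
    then show ?thesis using C0 by simp
  next
    case False
    have "rhs_sum a f n x = ereal (\<Sum>r=0..n. a n r * (1 / (real r + 1) * (\<Sum>j=0..r. real_of_ereal (wbar_mod f x (pi / real (j+1))))))"
      using Wfacts(5)[OF H(1) False] by simp
    then show ?thesis using core[OF H False] by simp
  qed
  show ?thesis
  proof (rule conjI)
    show "\<exists>C>0. \<forall>(f::real \<Rightarrow> real) a b.
        L1 f \<and> admissible_matrix a \<and> admissible_matrix b \<and>
        (\<forall>n. a n n \<le> K1 / (real n + 1)) \<and>
        (\<forall>n s. s \<le> n \<longrightarrow> (1 / (real s + 1)) * (\<Sum>r=0..s. a n r) \<le> K2 * a n s) \<and>
        (\<forall>n r l. l \<le> r \<and> r + 1 \<le> n \<longrightarrow>
            \<bar>a n r * b r (r - l) - a n (r + 1) * b (r + 1) (r + 1 - l)\<bar>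
              \<le> K3 * a n r / (real r + 1)^2)
      \<longrightarrow> (\<forall>n x. ereal \<bar>T_AB a b f n x - conj_trunc f x (pi / (real n + 1))\<bar>
                    \<le> ereal C * rhs_sum a f n x)"
      using C0 ereal_core by blast
    show "\<forall>K4>0. \<exists>C>0. \<forall>(f::real \<Rightarrow> real) a b x L.
        L1 f \<and> admissible_matrix a \<and> admissible_matrix b \<and>
        (\<forall>n. a n n \<le> K1 / (real n + 1)) \<and>
        (\<forall>n s. s \<le> n \<longrightarrow> (1 / (real s + 1)) * (\<Sum>r=0..s. a n r) \<le> K2 * a n s) \<and>
        (\<forall>n r l. l \<le> r \<and> r + 1 \<le> n \<longrightarrow>
            \<bar>a n r * b r (r - l) - a n (r + 1) * b (r + 1) (r + 1 - l)\<bar>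
              \<le> K3 * a n r / (real r + 1)^2) \<and>
        ((\<lambda>\<epsilon>. conj_trunc f x \<epsilon>) \<longlongrightarrow> L) (at_right 0) \<and>
        (\<forall>n::nat. ennreal (1 / pi) *
            (\<integral>\<^sup>+ t\<in>{0<..pi / (real n + 1)}. ennreal (\<bar>psi f x t\<bar> / t) \<partial>lborel)
            \<le> ennreal (K4 * w_mod f x (pi / (real n + 1))))
      \<longrightarrow> (\<forall>n. ereal \<bar>T_AB a b f n x - L\<bar> \<le> ereal C * rhs_sum a f n x)"
    proof (intro allI impI)
      fix K4 :: real assume K4: "K4 > 0"
      show "\<exists>C>0. \<forall>(f::real \<Rightarrow> real) a b x L.
        L1 f \<and> admissible_matrix a \<and> admissible_matrix b \<and>
        (\<forall>n. a n n \<le> K1 / (real n + 1)) \<and>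
        (\<forall>n s. s \<le> n \<longrightarrow> (1 / (real s + 1)) * (\<Sum>r=0..s. a n r) \<le> K2 * a n s) \<and>
        (\<forall>n r l. l \<le> r \<and> r + 1 \<le> n \<longrightarrow>
            \<bar>a n r * b r (r - l) - a n (r + 1) * b (r + 1) (r + 1 - l)\<bar>
              \<le> K3 * a n r / (real r + 1)^2) \<and>
        ((\<lambda>\<epsilon>. conj_trunc f x \<epsilon>) \<longlongrightarrow> L) (at_right 0) \<and>
        (\<forall>n::nat. ennreal (1 / pi) *
            (\<integral>\<^sup>+ t\<in>{0<..pi / (real n + 1)}. ennreal (\<bar>psi f x t\<bar> / t) \<partial>lborel)
            \<le> ennreal (K4 * w_mod f x (pi / (real n + 1))))
      \<longrightarrow> (\<forall>n. ereal \<bar>T_AB a b f n x - L\<bar> \<le> ereal C * rhs_sum a f n x)"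
      proof (rule exI[of _ "C + K4"], intro conjI allI impI)
        show "0 < C + K4" using C0 K4 by simp
        fix f :: "real \<Rightarrow> real" and a b x Lv n
        assume H: "L1 f \<and> admissible_matrix a \<and> admissible_matrix b \<and>
        (\<forall>n. a n n \<le> K1 / (real n + 1)) \<and>
        (\<forall>n s. s \<le> n \<longrightarrow> (1 / (real s + 1)) * (\<Sum>r=0..s. a n r) \<le> K2 * a n s) \<and>
        (\<forall>n r l. l \<le> r \<and> r + 1 \<le> n \<longrightarrow>
            \<bar>a n r * b r (r - l) - a n (r + 1) * b (r + 1) (r + 1 - l)\<bar>
              \<le> K3 * a n r / (real r + 1)^2) \<and>
        ((\<lambda>\<epsilon>. conj_trunc f x \<epsilon>) \<longlongrightarrow> Lv) (at_right 0) \<and>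
        (\<forall>n::nat. ennreal (1 / pi) *
            (\<integral>\<^sup>+ t\<in>{0<..pi / (real n + 1)}. ennreal (\<bar>psi f x t\<bar> / t) \<partial>lborel)
            \<le> ennreal (K4 * w_mod f x (pi / (real n + 1))))"
        then have L: "L1 f" and A: "admissible_matrix a" and B: "admissible_matrix b"
          and H4: "\<forall>n. a n n \<le> K1 / (real n + 1)"
          and H5: "\<forall>n s. s \<le> n \<longrightarrow> (1 / (real s + 1)) * (\<Sum>r=0..s. a n r) \<le> K2 * a n s"
          and H6: "\<forall>n r l. l \<le> r \<and> r + 1 \<le> n \<longrightarrow>
            \<bar>a n r * b r (r - l) - a n (r + 1) * b (r + 1) (r + 1 - l)\<bar>
              \<le> K3 * a n r / (real r + 1)^2"
          and lim: "((\<lambda>\<epsilon>. conj_trunc f x \<epsilon>) \<longlongrightarrow> Lv) (at_right 0)"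
          and hyp: "\<forall>n::nat. ennreal (1 / pi) *
            (\<integral>\<^sup>+ t\<in>{0<..pi / (real n + 1)}. ennreal (\<bar>psi f x t\<bar> / t) \<partial>lborel)
            \<le> ennreal (K4 * w_mod f x (pi / (real n + 1)))" by auto
        show "ereal \<bar>T_AB a b f n x - Lv\<bar> \<le> ereal (C + K4) * rhs_sum a f n x"
        proof (cases "wbar_mod f x pi = \<infinity>")
          case True
          then have "rhs_sum a f n x = \<infinity>" by (rule rhs_inf[OF L A])
          then show ?thesis using C0 K4 by simp
        next
          case False
          define W where "W = (\<lambda>k. real_of_ereal (wbar_mod f x (pi / real k)))"
          define R where "R = (\<Sum>r=0..n. a n r * (1 / (real r + 1) * (\<Sum>j=0..r. W (j+1))))"
          have rhs: "rhs_sum a f n x = ereal R" unfolding R_def W_def using Wfacts(5)[OF L False] by simp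
          have c1: "\<bar>T_AB a b f n x - conj_trunc f x (pi / (real n + 1))\<bar> \<le> C * R"
            using core[OF L A B H4 H5 H6 False, of n] unfolding R_def W_def by simp
          have an: "\<And>r. r \<le> n \<Longrightarrow> 0 \<le> a n r" using A unfolding admissible_matrix_def by auto
          have sa: "(\<Sum>r=0..n. a n r) = 1" using A unfolding admissible_matrix_def by auto
          have WR: "W (n+1) \<le> R"
            using R_bounds(3)[where a="a n" and W=W, OF an sa] Wfacts(3)[OF L False] unfolding R_def W_def by auto
          have wW: "w_mod f x (pi / (real n + 1)) \<le> W (n+1)" unfolding W_def by (rule Wfacts(6)[OF L False])
          have w0: "0 \<le> w_mod f x (pi / (real n + 1))"
          proof -
            have "0 \<le> integral {0..pi / (real n + 1)} (\<lambda>u. \<bar>psi f x u\<bar>)"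
              by (rule integral_nonneg[OF SI_HK(1)[OF SI_abs_psi[OF L]]]) auto
            then show ?thesis unfolding w_mod_def F_eq[OF L] by simp
          qed
          have c2: "\<bar>conj_trunc f x (pi / (real n + 1)) - Lv\<bar> \<le> K4 * w_mod f x (pi / (real n + 1))"
          proof (rule trunc_limit[OF L lim])
            show "0 < pi / (real n + 1)" by simp
            show "pi / (real n + 1) \<le> pi" using pi_gt_zero by (simp add: field_simps)
            show "0 \<le> K4 * w_mod f x (pi / (real n + 1))" using K4 w0 by simp
            show "ennreal (1 / pi) * (\<integral>\<^sup>+ t\<in>{0<..pi / (real n + 1)}. ennreal (\<bar>psi f x t\<bar> / t) \<partial>lborel)
              \<le> ennreal (K4 * w_mod f x (pi / (real n + 1)))" using hyp by blast
          qed
          have "K4 * w_mod f x (pi / (real n + 1)) \<le> K4 * R"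
            using wW WR K4 by (intro mult_left_mono) auto
          then have "\<bar>T_AB a b f n x - Lv\<bar> \<le> C * R + K4 * R" using c1 c2 by linarith
          then have "\<bar>T_AB a b f n x - Lv\<bar> \<le> (C + K4) * R" by (simp add: algebra_simps)
          then show ?thesis unfolding rhs by simp
        qed
      qed
    qed
  qed
qed

end
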